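(* Let $N\ge 2$, let $T_N$ be the homogeneous tree in which every vertex has degree $N$, and fix a root $o$. Let $m>1$ and $(p,q)\in G_1=\{(p,q): p\ge0,\ m-1-p<q<m\}$. Then for every $\epsilon>0$ there exists a weight $\mu$ on $T_N$ such that $$W_o(n)\asymp n^{\frac{mp+q}{p+q-m+1}}(\ln n)^{\frac{m-1}{p+q-m+1}+\epsilon}\quad\text{for } n\ge 2,$$ and the inequality $\Delta_m u+u^p|\nabla u|^q\le 0$ on $T_N$ admits a nontrivial positive solution.
   Context: A weight on a graph $(V,E)$ is a symmetric function $\mu:V\times V\to[0,\infty)$ with $\mu_{xy}=\mu_{yx}>0$ if and only if $x\sim y$ (adjacent); $\mu(x)=\sum_{y\sim x}\mu_{xy}$. For $m>1$, $\Delta_m u(x)=\frac{1}{\mu(x)}\sum_{y\sim x}\mu_{xy}|u(y)-u(x)|^{m-2}(u(y)-u(x))$ and $|\nabla u(x)|=\big(\sum_{y\sim x}\frac{\mu_{xy}}{2\mu(x)}(u(y)-u(x))^2\big)^{1/2}$. $d$ is the graph distance, $B(o,n)=\{x: d(o,x)\le n\}$, $W_o(n)=\sum_{x\in B(o,n),\,y\in V,\,d(o,x)<d(o,y)}\mu_{xy}$. $f(n)\asymp g(n)$ for $n\ge2$ means there are constants $c,C>0$ with $c\,g(n)\le f(n)\le C\,g(n)$ for all $n\ge 2$. A nontrivial positive solution is a non-constant $u:V\to(0,\infty)$ with $\Delta_m u(x)+u(x)^p|\nabla u(x)|^q\le0$ for all $x\in V$. *)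

theory Defs
  imports Complex_Main
begin

text \<open>Model of T_N: reduced words over the alphabet {0..N-1} (no two consecutive
letters equal), i.e. the Cayley graph of the free product of N copies of Z/2.
Two words are adjacent iff one is obtained from the other by appending one letter.
Every vertex has degree exactly N and the graph is a tree.\<close>

definition tree_V :: "nat \<Rightarrow> nat list set" where
  "tree_V N = {w. (\<forall>a\<in>set w. a < N) \<and> (\<forall>i. Suc i < length w \<longrightarrow> w ! i \<noteq> w ! Suc i)}"

definition tree_adj :: "nat \<Rightarrow> nat list \<Rightarrow> nat list \<Rightarrow> bool" where
  "tree_adj N x y \<longleftrightarrow> x \<in> tree_V N \<and> y \<in> tree_V N \<and>
     ((\<exists>a. y = x @ [a]) \<or> (\<exists>a. x = y @ [a]))"

definition is_weight :: "'a set \<Rightarrow> ('a \<Rightarrow> 'a \<Rightarrow> bool) \<Rightarrow> ('a \<Rightarrow> 'a \<Rightarrow> real) \<Rightarrow> bool" where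
  "is_weight V adj \<mu> \<longleftrightarrow>
     (\<forall>x\<in>V. \<forall>y\<in>V. \<mu> x y \<ge> 0 \<and> \<mu> x y = \<mu> y x \<and> (\<mu> x y > 0 \<longleftrightarrow> adj x y))"

definition nbrs :: "'a set \<Rightarrow> ('a \<Rightarrow> 'a \<Rightarrow> bool) \<Rightarrow> 'a \<Rightarrow> 'a set" where
  "nbrs V adj x = {y\<in>V. adj x y}"

definition vmeas :: "'a set \<Rightarrow> ('a \<Rightarrow> 'a \<Rightarrow> bool) \<Rightarrow> ('a \<Rightarrow> 'a \<Rightarrow> real) \<Rightarrow> 'a \<Rightarrow> real" where
  "vmeas V adj \<mu> x = (\<Sum>y\<in>nbrs V adj x. \<mu> x y)"

definition mlap :: "'a set \<Rightarrow> ('a \<Rightarrow> 'a \<Rightarrow> bool) \<Rightarrow> ('a \<Rightarrow> 'a \<Rightarrow> real) \<Rightarrow> real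
    \<Rightarrow> ('a \<Rightarrow> real) \<Rightarrow> 'a \<Rightarrow> real" where
  "mlap V adj \<mu> m u x = (1 / vmeas V adj \<mu> x) *
     (\<Sum>y\<in>nbrs V adj x. \<mu> x y * (\<bar>u y - u x\<bar> powr (m - 2)) * (u y - u x))"

definition gradn :: "'a set \<Rightarrow> ('a \<Rightarrow> 'a \<Rightarrow> bool) \<Rightarrow> ('a \<Rightarrow> 'a \<Rightarrow> real)
    \<Rightarrow> ('a \<Rightarrow> real) \<Rightarrow> 'a \<Rightarrow> real" where
  "gradn V adj \<mu> u x = sqrt (\<Sum>y\<in>nbrs V adj x. \<mu> x y / (2 * vmeas V adj \<mu> x) * (u y - u x)^2)"

definition gdist :: "('a \<Rightarrow> 'a \<Rightarrow> bool) \<Rightarrow> 'a \<Rightarrow> 'a \<Rightarrow> nat" where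
  "gdist adj x y = (LEAST n. (adj ^^ n) x y)"

definition ball :: "'a set \<Rightarrow> ('a \<Rightarrow> 'a \<Rightarrow> bool) \<Rightarrow> 'a \<Rightarrow> nat \<Rightarrow> 'a set" where
  "ball V adj r n = {x\<in>V. gdist adj r x \<le> n}"

definition W_o :: "'a set \<Rightarrow> ('a \<Rightarrow> 'a \<Rightarrow> bool) \<Rightarrow> ('a \<Rightarrow> 'a \<Rightarrow> real) \<Rightarrow> 'a \<Rightarrow> nat \<Rightarrow> real" where
  "W_o V adj \<mu> r n = (\<Sum>x\<in>ball V adj r n.
       \<Sum>y\<in>{y\<in>nbrs V adj x. gdist adj r x < gdist adj r y}. \<mu> x y)"

text \<open>The power |\<nabla>u|^q with the conventions t^0 = 1; for q < 0 we require
|\<nabla>u| > 0 separately (otherwise the term would be +\<infinity>).\<close>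
definition gpow :: "real \<Rightarrow> real \<Rightarrow> real" where
  "gpow g q = (if q = 0 then 1 else g powr q)"

definition nontriv_pos_solution :: "'a set \<Rightarrow> ('a \<Rightarrow> 'a \<Rightarrow> bool) \<Rightarrow> ('a \<Rightarrow> 'a \<Rightarrow> real)
    \<Rightarrow> real \<Rightarrow> real \<Rightarrow> real \<Rightarrow> ('a \<Rightarrow> real) \<Rightarrow> bool" where
  "nontriv_pos_solution V adj \<mu> m p q u \<longleftrightarrow>
     (\<forall>x\<in>V. u x > 0) \<and> (\<exists>x\<in>V. \<exists>y\<in>V. u x \<noteq> u y) \<and>
     (\<forall>x\<in>V. (q < 0 \<longrightarrow> gradn V adj \<mu> u x > 0) \<and>
        mlap V adj \<mu> m u x + (u x) powr p * gpow (gradn V adj \<mu> u x) q \<le> 0)"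

end

theory Submission
  imports Defs
begin


definition g :: "real \<Rightarrow> real \<Rightarrow> real \<Rightarrow> real" where
  "g a b t = t powr a * ln t powr b"

lemma ln_ge1: "3 \<le> (t::real) \<Longrightarrow> 1 \<le> ln t"
  using ln_ge_iff[of t 1] exp_le by auto

lemma g_pos: "1 < t \<Longrightarrow> 0 < g a b t"
  by (simp add: g_def)

lemma g_mult: "1 < t \<Longrightarrow> g a b t * g c d t = g (a + c) (b + d) t"
  by (simp add: g_def powr_add)

lemma g_powr: "1 < t \<Longrightarrow> g a b t powr e = g (a * e) (b * e) t"
  by (simp add: g_def powr_mult powr_powr)

lemma g_inv: "1 < t \<Longrightarrow> 1 / g a b t = g (- a) (- b) t"
  by (simp add: g_def powr_minus_divide)

lemma g_mono_b: "3 \<le> t \<Longrightarrow> b \<le> b' \<Longrightarrow> g a b t \<le> g a b' t"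
  unfolding g_def using ln_ge1[of t] by (intro mult_left_mono powr_mono) auto

lemma pw_ratio: "1/2 \<le> (x::real) \<Longrightarrow> x \<le> 2 \<Longrightarrow> x powr a \<le> 2 powr \<bar>a\<bar>"
proof (cases "a \<ge> 0")
  case True
  assume "1/2 \<le> x" "x \<le> 2"
  then show ?thesis using True by (simp add: powr_mono2)
next
  case False
  assume h: "1/2 \<le> x" "x \<le> 2"
  have "x powr a = (1/x) powr (-a)" using h by (simp add: powr_divide powr_minus_divide)
  also have "\<dots> \<le> 2 powr (-a)" using h False
    by (intro powr_mono2) (auto simp: field_simps)
  finally show ?thesis using False by simp
qed

lemma g_ratio: assumes "4 \<le> s" "4 \<le> t" "s \<le> 2 * t" "t \<le> 2 * s"
  shows "g a b s \<le> 2 powr (\<bar>a\<bar> + \<bar>b\<bar>) * g a b t"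
proof -
  have l4: "ln 4 = ln 2 + ln (2::real)"
  proof -
    have "ln (4::real) = ln (2 * 2)" by simp
    also have "\<dots> = ln 2 + ln 2" by (rule ln_mult_pos) auto
    finally show ?thesis .
  qed
  have l4t: "ln 4 \<le> ln t" "ln 4 \<le> ln s" using assms by auto
  have lt: "ln s \<le> ln 2 + ln t"
  proof -
    have "ln s \<le> ln (2 * t)" using assms by simp
    also have "\<dots> = ln 2 + ln t" by (rule ln_mult_pos) (use assms in auto)
    finally show ?thesis .
  qed
  have ls: "ln t \<le> ln 2 + ln s"
  proof -
    have "ln t \<le> ln (2 * s)" using assms by simp
    also have "\<dots> = ln 2 + ln s" by (rule ln_mult_pos) (use assms in auto)
    finally show ?thesis .
  qed
  have lpos: "0 < ln t" "0 < ln s" using assms by auto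
  have r1: "(s / t) powr a \<le> 2 powr \<bar>a\<bar>" using assms
    by (intro pw_ratio) (simp_all add: le_divide_eq divide_le_eq)
  have "1/2 \<le> ln s / ln t" using lpos l4 l4t lt ls by (simp add: le_divide_eq)
  moreover have "ln s / ln t \<le> 2" using lpos l4 l4t lt ls by (simp add: divide_le_eq)
  ultimately have r2: "(ln s / ln t) powr b \<le> 2 powr \<bar>b\<bar>" by (rule pw_ratio)
  have "g a b s = g a b t * ((s / t) powr a * (ln s / ln t) powr b)"
    using assms lpos by (simp add: g_def powr_divide)
  also have "\<dots> \<le> g a b t * (2 powr \<bar>a\<bar> * 2 powr \<bar>b\<bar>)"
    using r1 r2 g_pos[of t a b] assms by (intro mult_left_mono mult_mono) auto
  finally show ?thesis by (simp add: powr_add mult_ac)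
qed

lemma g_deriv: assumes "1 < x"
  shows "(g a b has_real_derivative x powr (a - 1) * ln x powr (b - 1) * (a * ln x + b)) (at x)"
proof -
  have lp: "0 < ln x" using assms by simp
  have "((\<lambda>x. x powr a * ln x powr b) has_real_derivative
      (a * x powr (a - 1) * ln x powr b + x powr a * (b * ln x powr (b - 1) * (1 / x)))) (at x)"
    using assms lp by (auto intro!: derivative_eq_intros)
  moreover have "a * x powr (a - 1) * ln x powr b + x powr a * (b * ln x powr (b - 1) * (1 / x))
      = x powr (a - 1) * ln x powr (b - 1) * (a * ln x + b)"
  proof -
    have e1: "x powr a = x powr (a - 1) * x" using powr_add[of x "a - 1" 1] assms by simp
    have e2: "ln x powr b = ln x powr (b - 1) * ln x" using powr_add[of "ln x" "b - 1" 1] lp by simp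
    show ?thesis unfolding e1 e2 using assms by (simp add: field_simps)
  qed
  ultimately show ?thesis unfolding g_def[abs_def] by simp
qed

lemma g_mvt: assumes "2 < t"
  shows "\<exists>\<xi>. t - 1 < \<xi> \<and> \<xi> < t \<and> g a b t - g a b (t - 1) = \<xi> powr (a - 1) * ln \<xi> powr (b - 1) * (a * ln \<xi> + b)"
proof -
  have "\<exists>z. t - 1 < z \<and> z < t \<and> g a b t - g a b (t - 1) = (t - (t - 1)) * (z powr (a - 1) * ln z powr (b - 1) * (a * ln z + b))"
    by (rule MVT2) (use assms in \<open>auto intro!: g_deriv\<close>)
  then show ?thesis by simp
qed

lemma diff_est:
  assumes t: "5 \<le> t"
    and bnd: "\<And>x. 1 \<le> x \<Longrightarrow> lo * x powr c \<le> s * (a * x + b) \<and> s * (a * x + b) \<le> hi * x powr c"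
    and lo: "0 \<le> lo"
  shows "lo / 2 powr (\<bar>a - 1\<bar> + \<bar>b - 1 + c\<bar>) * g (a - 1) (b - 1 + c) t \<le> s * (g a b t - g a b (t - 1)) \<and>
         s * (g a b t - g a b (t - 1)) \<le> hi * 2 powr (\<bar>a - 1\<bar> + \<bar>b - 1 + c\<bar>) * g (a - 1) (b - 1 + c) t"
proof -
  let ?K = "2 powr (\<bar>a - 1\<bar> + \<bar>b - 1 + c\<bar>)"
  obtain \<xi> where xi: "t - 1 < \<xi>" "\<xi> < t" and e: "g a b t - g a b (t - 1) = \<xi> powr (a - 1) * ln \<xi> powr (b - 1) * (a * ln \<xi> + b)"
    using g_mvt[of t a b] t by auto
  have x1: "1 < \<xi>" using xi t by simp
  have L1: "1 \<le> ln \<xi>" using ln_ge1[of \<xi>] xi t by simp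
  have e2: "s * (g a b t - g a b (t - 1)) = g (a - 1) (b - 1) \<xi> * (s * (a * ln \<xi> + b))"
    using e unfolding g_def by (simp add: mult_ac)
  have gx: "g (a - 1) (b - 1) \<xi> * ln \<xi> powr c = g (a - 1) (b - 1 + c) \<xi>"
    using g_mult[OF x1, of "a - 1" "b - 1" 0 c] x1 by (simp add: g_def)
  have gp: "0 < g (a - 1) (b - 1) \<xi>" using g_pos[OF x1] .
  from bnd[OF L1] have b1: "lo * ln \<xi> powr c \<le> s * (a * ln \<xi> + b)" and b2: "s * (a * ln \<xi> + b) \<le> hi * ln \<xi> powr c" by auto
  have A: "lo * g (a - 1) (b - 1 + c) \<xi> \<le> s * (g a b t - g a b (t - 1))"
    unfolding e2 gx[symmetric] using mult_left_mono[OF b1 less_imp_le[OF gp]] by (simp add: mult_ac)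
  have B: "s * (g a b t - g a b (t - 1)) \<le> hi * g (a - 1) (b - 1 + c) \<xi>"
    unfolding e2 gx[symmetric] using mult_left_mono[OF b2 less_imp_le[OF gp]] by (simp add: mult_ac)
  have r1: "g (a - 1) (b - 1 + c) \<xi> \<le> ?K * g (a - 1) (b - 1 + c) t"
    by (rule g_ratio) (use xi t in auto)
  have r2: "g (a - 1) (b - 1 + c) t \<le> ?K * g (a - 1) (b - 1 + c) \<xi>"
    by (rule g_ratio) (use xi t in auto)
  have Kp: "0 < ?K" by simp
  have hi: "0 \<le> hi"
  proof -
    have "lo * 1 powr c \<le> hi * 1 powr c" using bnd[of 1] by auto
    then show ?thesis using lo by simp
  qed
  have "lo / ?K * g (a - 1) (b - 1 + c) t \<le> lo * g (a - 1) (b - 1 + c) \<xi>"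
  proof -
    have "lo / ?K * g (a - 1) (b - 1 + c) t \<le> lo / ?K * (?K * g (a - 1) (b - 1 + c) \<xi>)"
      using r2 lo Kp by (intro mult_left_mono) auto
    then show ?thesis using Kp by simp
  qed
  moreover have "hi * g (a - 1) (b - 1 + c) \<xi> \<le> hi * ?K * g (a - 1) (b - 1 + c) t"
    using mult_left_mono[OF r1 hi] by (simp add: mult_ac)
  ultimately show ?thesis using A B by linarith
qed

lemma g_mono_t: "1 \<le> x \<Longrightarrow> x \<le> y \<Longrightarrow> 0 \<le> a \<Longrightarrow> 0 \<le> b \<Longrightarrow> g a b x \<le> g a b y"
  unfolding g_def by (intro mult_mono powr_mono2) auto

lemma g_shift_up: assumes x: "2 \<le> x" and c: "0 \<le> c" and a: "0 \<le> a" and b: "0 \<le> b"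
  shows "g a b (x + c) \<le> ((1 + c / 2) powr a * (1 + ln (1 + c) / ln 2) powr b) * g a b x"
proof -
  have l2: "0 < ln (2::real)" by simp
  have lx: "ln 2 \<le> ln x" using x by simp
  have lxp: "0 < ln x" using x by simp
  have "c * 2 \<le> c * x" using x c by (intro mult_left_mono) auto
  then have t1: "x + c \<le> (1 + c / 2) * x" by (simp add: algebra_simps)
  have "c * 1 \<le> c * x" using x c by (intro mult_left_mono) auto
  then have "ln (x + c) \<le> ln (x * (1 + c))" using x c by (intro ln_mono) (auto simp: algebra_simps)
  also have "\<dots> = ln x + ln (1 + c)" using x c by (intro ln_mult_pos) auto
  also have "\<dots> \<le> ln x * (1 + ln (1 + c) / ln 2)"
  proof -
    have "ln (1 + c) \<le> ln x * (ln (1 + c) / ln 2)"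
    proof -
      have "0 \<le> ln (1 + c) / ln 2" using c by simp
      then have "1 * (ln (1 + c) / ln 2) \<le> (ln x / ln 2) * (ln (1 + c) / ln 2)"
        using lx l2 by (intro mult_right_mono) auto
      then show ?thesis using l2 by (simp add: field_simps)
    qed
    then show ?thesis by (simp add: algebra_simps)
  qed
  finally have t2: "ln (x + c) \<le> ln x * (1 + ln (1 + c) / ln 2)" .
  have "g a b (x + c) \<le> ((1 + c / 2) * x) powr a * (ln x * (1 + ln (1 + c) / ln 2)) powr b"
    unfolding g_def using x c a b t1 t2 by (intro mult_mono powr_mono2) auto
  also have "\<dots> = ((1 + c / 2) powr a * (1 + ln (1 + c) / ln 2) powr b) * g a b x"
    unfolding g_def using x c lxp by (simp add: powr_mult mult_ac)
  finally show ?thesis .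
qed

lemma g_half_low: assumes x: "2 \<le> x" and a: "0 \<le> a" and b: "0 \<le> b"
  shows "((1/2) powr a * (1/2) powr b) * g a b x \<le> g a b (x / 2 + 5)"
proof -
  have lxp: "0 < ln x" using x by simp
  have sq: "x \<le> (x / 2 + 5) * (x / 2 + 5)" using x by (simp add: algebra_simps)
  have "ln x \<le> ln ((x / 2 + 5) * (x / 2 + 5))" using x sq by (intro ln_mono) auto
  also have "\<dots> = 2 * ln (x / 2 + 5)" using x by (simp add: ln_mult_pos)
  finally have t2: "ln x / 2 \<le> ln (x / 2 + 5)" by simp
  have "((1/2) powr a * (1/2) powr b) * g a b x = (x / 2) powr a * (ln x / 2) powr b"
    unfolding g_def using x lxp by (simp add: powr_divide powr_minus_divide field_simps)
  also have "\<dots> \<le> g a b (x / 2 + 5)"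
    unfolding g_def using x a b t2 lxp by (intro mult_mono powr_mono2) auto
  finally show ?thesis .
qed




lemma tV_snoc: "x \<in> tree_V N \<Longrightarrow> (x @ [a] \<in> tree_V N \<longleftrightarrow> a < N \<and> (x \<noteq> [] \<longrightarrow> a \<noteq> last x))"
proof -
  assume x: "x \<in> tree_V N"
  show ?thesis
  proof
    assume h: "x @ [a] \<in> tree_V N"
    then have "a < N" unfolding tree_V_def by auto
    moreover have "x \<noteq> [] \<longrightarrow> a \<noteq> last x"
    proof
      assume "x \<noteq> []"
      then have "Suc (length x - 1) < length (x @ [a])" by simp
      with h have "(x@[a]) ! (length x - 1) \<noteq> (x@[a]) ! Suc (length x - 1)" unfolding tree_V_def by blast
      with \<open>x \<noteq> []\<close> show "a \<noteq> last x" by (simp add: nth_append last_conv_nth)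
    qed
    ultimately show "a < N \<and> (x \<noteq> [] \<longrightarrow> a \<noteq> last x)" by blast
  next
    assume h: "a < N \<and> (x \<noteq> [] \<longrightarrow> a \<noteq> last x)"
    have "(x@[a]) ! i \<noteq> (x@[a]) ! Suc i" if "Suc i < length (x@[a])" for i
    proof (cases "Suc i < length x")
      case True then show ?thesis using x unfolding tree_V_def by (simp add: nth_append)
    next
      case False
      then have "x \<noteq> []" "i = length x - 1" using that by auto
      then show ?thesis using h by (simp add: nth_append last_conv_nth)
    qed
    then show "x @ [a] \<in> tree_V N" using x h unfolding tree_V_def by auto
  qed
qed

lemma tV_nil: "[] \<in> tree_V N" unfolding tree_V_def by auto

lemma tV_butlast: "x \<in> tree_V N \<Longrightarrow> butlast x \<in> tree_V N"
  unfolding tree_V_def by (auto simp: nth_butlast dest: in_set_butlastD)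

definition ch :: "nat \<Rightarrow> nat list \<Rightarrow> nat set" where
  "ch N x = {a. a < N \<and> (x \<noteq> [] \<longrightarrow> a \<noteq> last x)}"

lemma tV_last: "x \<in> tree_V N \<Longrightarrow> x \<noteq> [] \<Longrightarrow> last x < N"
  unfolding tree_V_def by auto

lemma card_ch: "x \<in> tree_V N \<Longrightarrow> card (ch N x) = (if x = [] then N else N - 1)"
proof (cases "x = []")
  case True then show ?thesis by (simp add: ch_def)
next
  case False
  assume x: "x \<in> tree_V N"
  have "ch N x = {..<N} - {last x}" using False by (auto simp: ch_def)
  then show ?thesis using False tV_last[OF x False] by simp
qed

lemma finite_ch: "finite (ch N x)" unfolding ch_def by auto

lemma adj_cases: "tree_adj N x y \<Longrightarrow> (\<exists>a. y = x @ [a]) \<or> (\<exists>a. x = y @ [a])"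
  unfolding tree_adj_def by auto

lemma adj_sym: "tree_adj N x y \<Longrightarrow> tree_adj N y x"
  unfolding tree_adj_def by auto

lemma adj_len: "tree_adj N x y \<Longrightarrow> length y = Suc (length x) \<or> length x = Suc (length y)"
  by (auto dest!: adj_cases)

lemma nbrs_eq: assumes x: "x \<in> tree_V N"
  shows "nbrs (tree_V N) (tree_adj N) x = (if x = [] then {} else {butlast x}) \<union> (\<lambda>a. x @ [a]) ` ch N x"
proof -
  have "y \<in> nbrs (tree_V N) (tree_adj N) x \<longleftrightarrow> y \<in> (if x = [] then {} else {butlast x}) \<union> (\<lambda>a. x @ [a]) ` ch N x" for y
  proof
    assume "y \<in> nbrs (tree_V N) (tree_adj N) x"
    then have y: "y \<in> tree_V N" and a: "tree_adj N x y" unfolding nbrs_def by auto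
    from adj_cases[OF a] show "y \<in> (if x = [] then {} else {butlast x}) \<union> (\<lambda>a. x @ [a]) ` ch N x"
    proof
      assume "\<exists>a. y = x @ [a]"
      then obtain a where "y = x @ [a]" by blast
      then show ?thesis using tV_snoc[OF x, of a] y by (auto simp: ch_def)
    next
      assume "\<exists>a. x = y @ [a]"
      then show ?thesis by auto
    qed
  next
    assume h: "y \<in> (if x = [] then {} else {butlast x}) \<union> (\<lambda>a. x @ [a]) ` ch N x"
    show "y \<in> nbrs (tree_V N) (tree_adj N) x"
    proof (cases "y \<in> (\<lambda>a. x @ [a]) ` ch N x")
      case True
      then obtain a where a: "a \<in> ch N x" "y = x @ [a]" by blast
      then have "y \<in> tree_V N" using tV_snoc[OF x, of a] by (auto simp: ch_def)
      then show ?thesis using a x unfolding nbrs_def tree_adj_def by auto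
    next
      case False
      then have "x \<noteq> []" "y = butlast x" using h by (auto split: if_splits)
      then have "x = y @ [last x]" by simp
      then show ?thesis using x tV_butlast[OF x] \<open>y = butlast x\<close> unfolding nbrs_def tree_adj_def by blast
    qed
  qed
  then show ?thesis by blast
qed

lemma finite_nbrs: "x \<in> tree_V N \<Longrightarrow> finite (nbrs (tree_V N) (tree_adj N) x)"
  by (simp add: nbrs_eq finite_ch)

lemma sum_nbrs: assumes x: "x \<in> tree_V N"
  shows "(\<Sum>y\<in>nbrs (tree_V N) (tree_adj N) x. F y) =
     (if x = [] then 0 else F (butlast x)) + (\<Sum>a\<in>ch N x. F (x @ [a]))"
proof -
  have inj: "inj_on (\<lambda>a. x @ [a]) (ch N x)" by (auto simp: inj_on_def)
  have s: "(\<Sum>y\<in>(\<lambda>a. x @ [a]) ` ch N x. F y) = (\<Sum>a\<in>ch N x. F (x @ [a]))"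
    by (rule sum.reindex[OF inj, unfolded comp_def])
  show ?thesis
  proof (cases "x = []")
    case True
    then have "nbrs (tree_V N) (tree_adj N) x = (\<lambda>a. x @ [a]) ` ch N x" using nbrs_eq[OF x] by simp
    then show ?thesis using s True by simp
  next
    case False
    have "butlast x \<notin> (\<lambda>a. x @ [a]) ` ch N x" using False by (auto dest: arg_cong[of _ _ length])
    then show ?thesis using False s by (simp add: nbrs_eq[OF x] finite_ch)
  qed
qed

lemma relpow_len: "(tree_adj N ^^ n) x y \<Longrightarrow>
   length y \<le> length x + n \<and> length x \<le> length y + n \<and> even (n + length x + length y)"
proof (induction n arbitrary: y)
  case 0 then show ?case by simp
next
  case (Suc n)
  from Suc.prems obtain z where z: "(tree_adj N ^^ n) x z" "tree_adj N z y" by (rule relpowp_Suc_E)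
  from Suc.IH[OF z(1)] adj_len[OF z(2)] show ?case by auto
qed

lemma path_nil: "x \<in> tree_V N \<Longrightarrow> (tree_adj N ^^ length x) [] x \<and> (tree_adj N ^^ length x) x []"
proof (induction x rule: rev_induct)
  case Nil then show ?case by simp
next
  case (snoc a x)
  have xV: "x \<in> tree_V N" using tV_butlast[OF snoc.prems] by simp
  have ad: "tree_adj N x (x @ [a])" using xV snoc.prems unfolding tree_adj_def by auto
  then have ad2: "tree_adj N (x @ [a]) x" by (rule adj_sym)
  from snoc.IH[OF xV] have "(tree_adj N ^^ length x) [] x" "(tree_adj N ^^ length x) x []" by auto
  then have "(tree_adj N ^^ Suc (length x)) [] (x @ [a])" "(tree_adj N ^^ Suc (length x)) (x @ [a]) []"
    using ad ad2 by (blast intro: relpowp_Suc_I relpowp_Suc_I2)+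
  then show ?case by simp
qed

lemma conn: "x \<in> tree_V N \<Longrightarrow> y \<in> tree_V N \<Longrightarrow> (tree_adj N ^^ (length x + length y)) x y"
  using path_nil[of x N] path_nil[of y N] by (auto simp: relpowp_add)

lemma gd_real: "x \<in> tree_V N \<Longrightarrow> y \<in> tree_V N \<Longrightarrow> (tree_adj N ^^ gdist (tree_adj N) x y) x y"
  unfolding gdist_def by (rule LeastI, rule conn)

lemma gd_le: "(tree_adj N ^^ n) x y \<Longrightarrow> gdist (tree_adj N) x y \<le> n"
  unfolding gdist_def by (rule Least_le)

lemma gd_self: "gdist (tree_adj N) x x = 0"
  using gd_le[of 0 N x x] by simp

lemma gd_pos: "x \<in> tree_V N \<Longrightarrow> y \<in> tree_V N \<Longrightarrow> y \<noteq> x \<Longrightarrow> gdist (tree_adj N) x y > 0"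
  using gd_real[of x N y] by (cases "gdist (tree_adj N) x y") auto

lemma gd_step: "r \<in> tree_V N \<Longrightarrow> x \<in> tree_V N \<Longrightarrow> tree_adj N x y \<Longrightarrow>
   gdist (tree_adj N) r y \<le> gdist (tree_adj N) r x + 1"
  using gd_le[OF relpowp_Suc_I[OF gd_real]] by simp

lemma gd_par: "r \<in> tree_V N \<Longrightarrow> tree_adj N x y \<Longrightarrow>
   gdist (tree_adj N) r x \<noteq> gdist (tree_adj N) r y"
proof
  assume r: "r \<in> tree_V N" and a: "tree_adj N x y" and e: "gdist (tree_adj N) r x = gdist (tree_adj N) r y"
  have xV: "x \<in> tree_V N" and yV: "y \<in> tree_V N" using a unfolding tree_adj_def by auto
  from relpow_len[OF gd_real[OF r xV]] relpow_len[OF gd_real[OF r yV]] adj_len[OF a] e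
  show False by auto
qed

lemma gd_len: "r \<in> tree_V N \<Longrightarrow> x \<in> tree_V N \<Longrightarrow>
   length x \<le> length r + gdist (tree_adj N) r x \<and> gdist (tree_adj N) r x \<le> length r + length x"
  using relpow_len[OF gd_real, of r N x] gd_le[OF conn, of r N x] by auto

definition lev :: "nat \<Rightarrow> nat \<Rightarrow> nat list set" where
  "lev N k = {z \<in> tree_V N. length z = k}"

lemma tV_sub: "tree_V N \<subseteq> {xs. set xs \<subseteq> {..<N}}" unfolding tree_V_def by auto

lemma finite_lev: "finite (lev N k)"
  by (rule finite_subset[OF _ finite_lists_length_eq[of "{..<N}" k]]) (auto simp: lev_def tree_V_def)

lemma card_lev: "card (lev N (Suc k)) = N * (N - 1) ^ k"
proof (induction k)
  case 0
  have "lev N 1 = (\<lambda>a. [a]) ` {..<N}"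
  proof
    show "lev N 1 \<subseteq> (\<lambda>a. [a]) ` {..<N}"
      by (auto simp: lev_def tree_V_def length_Suc_conv)
    show "(\<lambda>a. [a]) ` {..<N} \<subseteq> lev N 1"
      using tV_snoc[OF tV_nil] by (force simp: lev_def)
  qed
  then show ?case by (simp add: card_image inj_on_def)
next
  case (Suc k)
  let ?f = "\<lambda>(x, a). x @ [a :: nat]"
  have eq: "lev N (Suc (Suc k)) = ?f ` (SIGMA x:lev N (Suc k). ch N x)"
  proof
    show "lev N (Suc (Suc k)) \<subseteq> ?f ` (SIGMA x:lev N (Suc k). ch N x)"
    proof
      fix z assume z: "z \<in> lev N (Suc (Suc k))"
      then have zV: "z \<in> tree_V N" and zl: "length z = Suc (Suc k)" by (auto simp: lev_def)
      then have ne: "z \<noteq> []" by auto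
      have zz: "z = butlast z @ [last z]" using ne by simp
      have bV: "butlast z \<in> tree_V N" by (rule tV_butlast[OF zV])
      have "last z \<in> ch N (butlast z)" using tV_snoc[OF bV, of "last z"] zV zz by (simp add: ch_def)
      moreover have "butlast z \<in> lev N (Suc k)" using bV zl by (simp add: lev_def)
      ultimately show "z \<in> ?f ` (SIGMA x:lev N (Suc k). ch N x)"
        using zz by (auto intro!: image_eqI[of z _ "(butlast z, last z)"])
    qed
    show "?f ` (SIGMA x:lev N (Suc k). ch N x) \<subseteq> lev N (Suc (Suc k))"
      using tV_snoc by (auto simp: lev_def ch_def)
  qed
  have inj: "inj_on ?f (SIGMA x:lev N (Suc k). ch N x)" by (auto simp: inj_on_def)
  have "card (lev N (Suc (Suc k))) = card (SIGMA x:lev N (Suc k). ch N x)"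
    using eq card_image[OF inj] by simp
  also have "\<dots> = (\<Sum>x\<in>lev N (Suc k). card (ch N x))"
    by (rule card_SigmaI[OF finite_lev]) (simp add: finite_ch)
  also have "\<dots> = (\<Sum>x\<in>lev N (Suc k). N - 1)"
    by (rule sum.cong) (auto simp: card_ch lev_def)
  also have "\<dots> = N * (N - 1) ^ Suc k" using Suc.IH by simp
  finally show ?case .
qed

definition Zs :: "nat \<Rightarrow> nat \<Rightarrow> nat list set" where
  "Zs N j = {z \<in> tree_V N. 1 \<le> length z \<and> length z \<le> j}"

lemma finite_Zs: "finite (Zs N j)"
  by (rule finite_subset[OF _ finite_lists_length_le[of "{..<N}" j]]) (auto simp: Zs_def tree_V_def)

lemma sum_Zs: "(\<Sum>z\<in>Zs N j. F (length z)) = (\<Sum>k=1..j. real (card (lev N k)) * F k)"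
proof (induction j)
  case 0 then show ?case by (simp add: Zs_def)
next
  case (Suc j)
  have eq: "Zs N (Suc j) = Zs N j \<union> lev N (Suc j)" by (auto simp: Zs_def lev_def)
  have d: "Zs N j \<inter> lev N (Suc j) = {}" by (auto simp: Zs_def lev_def)
  have "(\<Sum>z\<in>Zs N (Suc j). F (length z)) = (\<Sum>z\<in>Zs N j. F (length z)) + (\<Sum>z\<in>lev N (Suc j). F (length z))"
    unfolding eq by (rule sum.union_disjoint[OF finite_Zs finite_lev d])
  also have "(\<Sum>z\<in>lev N (Suc j). F (length z)) = real (card (lev N (Suc j))) * F (Suc j)"
    by (simp add: lev_def)
  finally show ?case using Suc.IH by simp
qed

definition mu :: "nat \<Rightarrow> (nat \<Rightarrow> real) \<Rightarrow> nat list \<Rightarrow> nat list \<Rightarrow> real" where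
  "mu N b x y = (if tree_adj N x y then b (max (length x) (length y)) else 0)"

lemma adj_bl: "tree_adj N x y \<Longrightarrow>
  (length x < length y \<and> x = butlast y \<and> y \<noteq> []) \<or> (length y < length x \<and> y = butlast x \<and> x \<noteq> [])"
  by (auto dest!: adj_cases)

definition lg :: "nat list \<times> nat list \<Rightarrow> nat list" where
  "lg = (\<lambda>(x, y). if length x < length y then y else x)"

lemma finite_ball: "finite (ball (tree_V N) (tree_adj N) r n) \<or> r \<notin> tree_V N"
proof (cases "r \<in> tree_V N")
  case True
  have "ball (tree_V N) (tree_adj N) r n \<subseteq> {xs. set xs \<subseteq> {..<N} \<and> length xs \<le> length r + n}"
    using gd_len[OF True] tV_sub by (fastforce simp: ball_def)
  then show ?thesis using finite_subset[OF _ finite_lists_length_le] by blast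
qed simp

abbreviation "Eset N r n \<equiv> (SIGMA x:ball (tree_V N) (tree_adj N) r n.
    {y \<in> nbrs (tree_V N) (tree_adj N) x. gdist (tree_adj N) r x < gdist (tree_adj N) r y})"

lemma W_sigma: assumes r: "r \<in> tree_V N"
  shows "W_o (tree_V N) (tree_adj N) \<mu> r n = (\<Sum>(x,y)\<in>Eset N r n. \<mu> x y)"
  unfolding W_o_def
  by (rule sum.Sigma) (use finite_ball[of N r n] r in \<open>auto simp: ball_def intro: finite_subset[OF _ finite_nbrs]\<close>)

lemma finite_Eset: "r \<in> tree_V N \<Longrightarrow> finite (Eset N r n)"
  using finite_ball[of N r n]
  by (intro finite_SigmaI) (auto simp: ball_def intro: finite_subset[OF _ finite_nbrs])

lemma W_upper: assumes r: "r \<in> tree_V N" and b: "\<And>k. b k \<ge> 0"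
  shows "W_o (tree_V N) (tree_adj N) (mu N b) r n \<le> (\<Sum>z\<in>Zs N (n + 1 + length r). b (length z))"
proof -
  let ?E = "Eset N r n"
  let ?d = "gdist (tree_adj N) r"
  have adjE: "tree_adj N x y" if "(x,y) \<in> ?E" for x y using that by (auto simp: nbrs_def)
  have inj: "inj_on lg ?E"
  proof (rule inj_onI)
    fix u v assume u: "u \<in> ?E" and v: "v \<in> ?E" and e: "lg u = lg v"
    obtain x y where u': "u = (x,y)" by (cases u)
    obtain x' y' where v': "v = (x',y')" by (cases v)
    have a1: "tree_adj N x y" and a2: "tree_adj N x' y'" using adjE u v u' v' by auto
    have d1: "?d x < ?d y" and d2: "?d x' < ?d y'" using u v u' v' by auto
    from adj_bl[OF a1] adj_bl[OF a2] e d1 d2 show "u = v" unfolding u' v' lg_def by (auto split: if_splits)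
  qed
  have sub: "lg ` ?E \<subseteq> Zs N (n + 1 + length r)"
  proof
    fix z assume "z \<in> lg ` ?E"
    then obtain x y where xy: "(x,y) \<in> ?E" and z: "z = lg (x,y)" by auto
    have a: "tree_adj N x y" using adjE[OF xy] .
    have xV: "x \<in> tree_V N" and yV: "y \<in> tree_V N" using a unfolding tree_adj_def by auto
    have dx: "?d x \<le> n" using xy by (auto simp: ball_def)
    have dy: "?d y \<le> n + 1" using gd_step[OF r xV a] dx by simp
    show "z \<in> Zs N (n + 1 + length r)"
      using adj_bl[OF a] gd_len[OF r xV] gd_len[OF r yV] dx dy xV yV unfolding z lg_def Zs_def by (auto simp: Suc_le_eq)
  qed
  have "W_o (tree_V N) (tree_adj N) (mu N b) r n = (\<Sum>u\<in>?E. b (length (lg u)))"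
    unfolding W_sigma[OF r]
    by (rule sum.cong) (auto simp: mu_def lg_def nbrs_def max_def)
  also have "\<dots> = (\<Sum>z\<in>lg ` ?E. b (length z))" by (rule sum.reindex[OF inj, symmetric, unfolded comp_def])
  also have "\<dots> \<le> (\<Sum>z\<in>Zs N (n + 1 + length r). b (length z))"
    by (rule sum_mono2[OF finite_Zs sub]) (simp add: b)
  finally show ?thesis .
qed

lemma W_lower: assumes r: "r \<in> tree_V N" and b: "\<And>k. b k \<ge> 0"
  shows "(\<Sum>z\<in>Zs N (n - length r). b (length z)) \<le> W_o (tree_V N) (tree_adj N) (mu N b) r n"
proof -
  let ?E = "Eset N r n"
  let ?d = "gdist (tree_adj N) r"
  define sel where "sel z = (if ?d (butlast z) < ?d z then (butlast z, z) else (z, butlast z))" for z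
  have lgsel: "lg (sel z) = z" if "z \<noteq> []" for z using that by (auto simp: sel_def lg_def)
  have inj: "inj_on sel (Zs N (n - length r))"
  proof (rule inj_on_inverseI[where g = lg])
    fix z assume "z \<in> Zs N (n - length r)"
    then have "z \<noteq> []" by (auto simp: Zs_def)
    then show "lg (sel z) = z" by (rule lgsel)
  qed
  have sub: "sel ` Zs N (n - length r) \<subseteq> ?E"
  proof
    fix u assume "u \<in> sel ` Zs N (n - length r)"
    then obtain z where z: "z \<in> Zs N (n - length r)" and u: "u = sel z" by auto
    have zV: "z \<in> tree_V N" and zl: "1 \<le> length z" "length z + length r \<le> n" using z by (auto simp: Zs_def)
    have ne: "z \<noteq> []" using zl by auto
    have bV: "butlast z \<in> tree_V N" using tV_butlast[OF zV] .
    have a: "tree_adj N (butlast z) z" using bV zV ne unfolding tree_adj_def by (metis append_butlast_last_id)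
    have a': "tree_adj N z (butlast z)" using adj_sym[OF a] .
    have n1: "z \<in> nbrs (tree_V N) (tree_adj N) (butlast z)" using a zV by (simp add: nbrs_def)
    have n2: "butlast z \<in> nbrs (tree_V N) (tree_adj N) z" using a' bV by (simp add: nbrs_def)
    have dz: "?d z \<le> n" using gd_len[OF r zV] zl by simp
    have "?d (butlast z) \<le> length r + length (butlast z)" using gd_len[OF r bV] by blast
    then have db: "?d (butlast z) \<le> n" using zl by simp
    have par: "?d (butlast z) \<noteq> ?d z" using gd_par[OF r a] .
    show "u \<in> ?E" unfolding u sel_def using n1 n2 dz db par zV bV
      by (auto simp: ball_def)
  qed
  have "(\<Sum>z\<in>Zs N (n - length r). b (length z)) = (\<Sum>z\<in>Zs N (n - length r). (\<lambda>(x,y). mu N b x y) (sel z))"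
  proof (rule sum.cong)
    fix z assume z: "z \<in> Zs N (n - length r)"
    then have zV: "z \<in> tree_V N" and ne: "z \<noteq> []" by (auto simp: Zs_def)
    have bV: "butlast z \<in> tree_V N" using tV_butlast[OF zV] .
    have a: "tree_adj N (butlast z) z" using bV zV ne unfolding tree_adj_def by (metis append_butlast_last_id)
    have a': "tree_adj N z (butlast z)" using adj_sym[OF a] .
    have m1: "max (length z) (length (butlast z)) = length z" "max (length (butlast z)) (length z) = length z"
      by auto
    show "b (length z) = (\<lambda>(x,y). mu N b x y) (sel z)" using a a'
      unfolding sel_def mu_def m1 by auto
  qed simp
  also have "\<dots> = (\<Sum>u\<in>sel ` Zs N (n - length r). (\<lambda>(x,y). mu N b x y) u)"
    by (rule sum.reindex[OF inj, symmetric, unfolded comp_def])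
  also have "\<dots> \<le> (\<Sum>u\<in>?E. (\<lambda>(x,y). mu N b x y) u)"
    by (rule sum_mono2[OF finite_Eset[OF r] sub]) (auto simp: mu_def b)
  also have "\<dots> = W_o (tree_V N) (tree_adj N) (mu N b) r n" unfolding W_sigma[OF r] ..
  finally show ?thesis .
qed

lemma sum_rad: assumes x: "x \<in> tree_V N"
  shows "(\<Sum>y\<in>nbrs (tree_V N) (tree_adj N) x. mu N b x y * h (length y)) =
    (if x = [] then real N * b 1 * h 1
     else b (length x) * h (length x - 1) + real (N - 1) * b (Suc (length x)) * h (Suc (length x)))"
proof -
  have c: "mu N b x (x @ [a]) * h (length (x @ [a])) = b (Suc (length x)) * h (Suc (length x))"
    if "a \<in> ch N x" for a
  proof -
    have "x @ [a] \<in> tree_V N" using that tV_snoc[OF x] by (simp add: ch_def)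
    then have "tree_adj N x (x @ [a])" using x unfolding tree_adj_def by auto
    then show ?thesis by (simp add: mu_def)
  qed
  have s: "(\<Sum>a\<in>ch N x. mu N b x (x @ [a]) * h (length (x @ [a]))) = real (card (ch N x)) * (b (Suc (length x)) * h (Suc (length x)))"
    using sum.cong[OF refl c] by simp
  show ?thesis
  proof (cases "x = []")
    case True then show ?thesis using s sum_nbrs[OF x, of "\<lambda>y. mu N b x y * h (length y)"] card_ch[OF x] by simp
  next
    case False
    have bV: "butlast x \<in> tree_V N" using tV_butlast[OF x] .
    have "tree_adj N x (butlast x)" using x bV False unfolding tree_adj_def by (metis append_butlast_last_id)
    moreover have "max (length x) (length (butlast x)) = length x" by simp
    ultimately have "mu N b x (butlast x) * h (length (butlast x)) = b (length x) * h (length x - 1)"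
      by (simp add: mu_def)
    then show ?thesis using False s sum_nbrs[OF x, of "\<lambda>y. mu N b x y * h (length y)"] card_ch[OF x]
      by simp
  qed
qed

lemma vmeas_rad: "x \<in> tree_V N \<Longrightarrow> vmeas (tree_V N) (tree_adj N) (mu N b) x =
    (if x = [] then real N * b 1
     else b (length x) + real (N - 1) * b (Suc (length x)))"
  using sum_rad[of x N b "\<lambda>_. 1"] by (simp add: vmeas_def)

lemma mlap_rad: "x \<in> tree_V N \<Longrightarrow> mlap (tree_V N) (tree_adj N) (mu N b) m (\<lambda>y. uf (length y)) x =
    (1 / vmeas (tree_V N) (tree_adj N) (mu N b) x) *
    (if x = [] then real N * b 1 * (\<bar>uf 1 - uf 0\<bar> powr (m - 2) * (uf 1 - uf 0))
     else b (length x) * (\<bar>uf (length x - 1) - uf (length x)\<bar> powr (m - 2) * (uf (length x - 1) - uf (length x)))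
       + real (N - 1) * b (Suc (length x)) * (\<bar>uf (Suc (length x)) - uf (length x)\<bar> powr (m - 2) * (uf (Suc (length x)) - uf (length x))))"
  using sum_rad[of x N b "\<lambda>l. \<bar>uf l - uf (length x)\<bar> powr (m - 2) * (uf l - uf (length x))"]
  by (simp add: mlap_def mult.assoc)

lemma gradn_rad: "x \<in> tree_V N \<Longrightarrow> gradn (tree_V N) (tree_adj N) (mu N b) (\<lambda>y. uf (length y)) x =
    sqrt ((if x = [] then real N * b 1 * (uf 1 - uf 0)^2
     else b (length x) * (uf (length x - 1) - uf (length x))^2
       + real (N - 1) * b (Suc (length x)) * (uf (Suc (length x)) - uf (length x))^2)
      / (2 * vmeas (tree_V N) (tree_adj N) (mu N b) x))"
proof -
  assume x: "x \<in> tree_V N"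
  let ?v = "vmeas (tree_V N) (tree_adj N) (mu N b) x"
  have "(\<Sum>y\<in>nbrs (tree_V N) (tree_adj N) x. mu N b x y / (2 * ?v) * (uf (length y) - uf (length x))^2)
     = (\<Sum>y\<in>nbrs (tree_V N) (tree_adj N) x. mu N b x y * (uf (length y) - uf (length x))^2) / (2 * ?v)"
    by (simp add: sum_divide_distrib)
  also have "\<dots> = (if x = [] then real N * b 1 * (uf 1 - uf 0)^2
     else b (length x) * (uf (length x - 1) - uf (length x))^2
       + real (N - 1) * b (Suc (length x)) * (uf (Suc (length x)) - uf (length x))^2) / (2 * ?v)"
    using sum_rad[OF x, of b "\<lambda>l. (uf l - uf (length x))^2"] by simp
  finally show ?thesis by (simp add: gradn_def)
qed

lemma W_pos: assumes r: "r \<in> tree_V N" and N: "2 \<le> N" and b: "\<And>k. b k \<ge> 0"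
  shows "b (Suc (length r)) \<le> W_o (tree_V N) (tree_adj N) (mu N b) r n"
proof -
  have "card (ch N r) \<ge> 1" using card_ch[OF r] N by auto
  then have "ch N r \<noteq> {}" by auto
  then obtain a where a: "a \<in> ch N r" by blast
  let ?y = "r @ [a]"
  have yV: "?y \<in> tree_V N" using a tV_snoc[OF r, of a] by (simp add: ch_def)
  have ad: "tree_adj N r ?y" using r yV unfolding tree_adj_def by auto
  have inE: "(r, ?y) \<in> Eset N r n"
    using r yV ad gd_self[of N r] gd_pos[OF r yV] by (auto simp: ball_def nbrs_def)
  have "mu N b r ?y = b (Suc (length r))" using ad by (simp add: mu_def)
  moreover have "(\<lambda>(x,y). mu N b x y) (r, ?y) \<le> (\<Sum>u\<in>Eset N r n. (\<lambda>(x,y). mu N b x y) u)"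
    by (rule member_le_sum[OF inE]) (auto simp: mu_def b finite_Eset[OF r] split: if_splits)
  ultimately show ?thesis unfolding W_sigma[OF r] by simp
qed




locale prm = fixes m p q \<epsilon> :: real
  assumes m1: "1 < m" and p0: "0 \<le> p" and qlo: "m - 1 - p < q" and qhi: "q < m" and e0: "0 < \<epsilon>"
begin

definition "PP = p + q - m + 1"
definition "ga = (m - q) / PP"
definition "al = (m * p + q) / PP"
definition "be = (m - 1) / PP + \<epsilon>"
definition "si = \<epsilon> / 2"
definition "de = (be - si) / (m - 1)"

lemma PP_pos: "0 < PP" using qlo by (simp add: PP_def)
lemma ga_pos: "0 < ga" using PP_pos qhi by (simp add: ga_def)
lemma si_pos: "0 < si" using e0 by (simp add: si_def)
lemma be_pos: "0 < be"
proof -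
  have "0 < (m - 1) / PP" using PP_pos m1 by simp
  then show ?thesis using e0 by (simp add: be_def)
qed
lemma de_pos: "0 < de"
proof -
  have "0 < (m - 1) / PP" using PP_pos m1 by simp
  then have "be - si > 0" using e0 by (simp add: be_def si_def)
  then show ?thesis using m1 by (simp add: de_def)
qed
lemma al_eq: "al - 1 = (ga + 1) * (m - 1)"
  using PP_pos by (simp add: al_def ga_def PP_def field_simps)
lemma al_pos: "0 < al"
proof -
  have "(ga + 1) * (m - 1) > 0" using ga_pos m1 by simp
  then show ?thesis using al_eq by simp
qed
lemma be_eq: "be = si + de * (m - 1)"
  using m1 by (simp add: de_def)
lemma dePP: "1 \<le> de * PP"
proof -
  have "de * PP = ((m - 1) / PP + \<epsilon> / 2) * PP / (m - 1)" by (simp add: de_def be_def si_def)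
  also have "\<dots> = 1 + \<epsilon> / 2 * PP / (m - 1)" using PP_pos m1 by (simp add: field_simps)
  finally show ?thesis using PP_pos m1 e0 by simp
qed
lemma expo1: "al - 1 + (- ga * p) + (- (ga + 1) * q) = -1"
proof -
  have "al - 1 + (- ga * p) + (- (ga + 1) * q) = ga * (m - 1 - p - q) + (m - 1 - q)"
    using al_eq by (simp add: algebra_simps)
  also have "ga * (m - 1 - p - q) = - (m - q)" using PP_pos by (simp add: ga_def PP_def field_simps)
  finally show ?thesis by simp
qed
lemma expo2: "be + (- de * p) + (- de * q) \<le> si - 1"
  using dePP be_eq by (simp add: PP_def algebra_simps)

definition "tt k = real k + 5"
definition "ff k = g (- ga) (- de) (tt k)"
definition "DD k = ff (k - 1) - ff k"
definition "Ph k = g 0 si (tt k)"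
definition "ww k = Ph k / DD k powr (m - 1)"
definition "HH k = g al be (tt k)"
definition "Gk k = sqrt ((ww k * DD k ^ 2 + ww (Suc k) * DD (Suc k) ^ 2) / (2 * (ww k + ww (Suc k))))"

lemma tt_ge: "5 \<le> tt k" by (simp add: tt_def)
lemma tt_pred: "1 \<le> k \<Longrightarrow> tt (k - 1) = tt k - 1" by (simp add: tt_def of_nat_diff)

abbreviation "gD \<equiv> g (- ga - 1) (- de)"

definition "KD = 2 powr (\<bar>- ga - 1\<bar> + \<bar>- de - 1 + 1\<bar>)"

lemma DD_est: assumes k: "1 \<le> k"
  shows "ga / KD * gD (tt k) \<le> DD k \<and> DD k \<le> (ga + de) * KD * gD (tt k)"
proof -
  have "ga / KD * g (- ga - 1) (- de - 1 + 1) (tt k) \<le> (- 1) * (g (- ga) (- de) (tt k) - g (- ga) (- de) (tt k - 1)) \<and>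
        (- 1) * (g (- ga) (- de) (tt k) - g (- ga) (- de) (tt k - 1)) \<le> (ga + de) * KD * g (- ga - 1) (- de - 1 + 1) (tt k)"
    unfolding KD_def
  proof (rule diff_est[OF tt_ge])
    fix x :: real assume "1 \<le> x"
    then show "ga * x powr 1 \<le> - 1 * (- ga * x + - de) \<and> - 1 * (- ga * x + - de) \<le> (ga + de) * x powr 1"
      using de_pos ga_pos by (simp add: algebra_simps)
  qed (use ga_pos in simp)
  then show ?thesis using tt_pred[OF k] by (simp add: DD_def ff_def)
qed

lemma pw_bounds: assumes "0 < (lo::real)" "lo \<le> x" "x \<le> hi"
  shows "min (lo powr e) (hi powr e) \<le> x powr e \<and> x powr e \<le> max (lo powr e) (hi powr e)"
proof (cases "0 \<le> e")
  case True
  have "lo powr e \<le> x powr e" using assms True by (intro powr_mono2) auto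
  moreover have "x powr e \<le> hi powr e" using assms True by (intro powr_mono2) auto
  ultimately show ?thesis by auto
next
  case False
  have "x powr e \<le> lo powr e" using assms False by (intro powr_mono2') auto
  moreover have "hi powr e \<le> x powr e" using assms False by (intro powr_mono2') auto
  ultimately show ?thesis by auto
qed

lemma KD_pos: "0 < KD" by (simp add: KD_def)
lemma two_powr_ge1: "0 \<le> (a::real) \<Longrightarrow> 1 \<le> 2 powr a" by (simp add: ge_one_powr_ge_zero)

lemma ratio_succ: "g a b (tt (Suc k)) \<le> 2 powr (\<bar>a\<bar> + \<bar>b\<bar>) * g a b (tt k) \<and>
   g a b (tt k) \<le> 2 powr (\<bar>a\<bar> + \<bar>b\<bar>) * g a b (tt (Suc k))"
  by (intro conjI g_ratio) (auto simp: tt_def)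

lemma gpos_tt: "0 < g a b (tt k)" using tt_ge[of k] by (intro g_pos) linarith

definition "KR = 2 powr (\<bar>- ga - 1\<bar> + \<bar>- de\<bar>)"
definition "lD = ga / KD / KR"
definition "hD = (ga + de) * KD * KR"

lemma KR_ge1: "1 \<le> KR" unfolding KR_def by (rule two_powr_ge1) simp

lemma lD_pos: "0 < lD" unfolding lD_def using ga_pos KD_pos KR_ge1 by simp
lemma hD_pos: "0 < hD" unfolding hD_def using ga_pos de_pos KD_pos KR_ge1 by simp

lemma DD_both: assumes k: "1 \<le> k"
  shows "lD * gD (tt k) \<le> DD k \<and> DD k \<le> hD * gD (tt k) \<and>
         lD * gD (tt k) \<le> DD (Suc k) \<and> DD (Suc k) \<le> hD * gD (tt k)"
proof -
  have gp: "0 < gD (tt k)" "0 < gD (tt (Suc k))" by (rule gpos_tt)+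
  have e1: "ga / KD * gD (tt k) \<le> DD k" "DD k \<le> (ga + de) * KD * gD (tt k)" using DD_est[OF k] by auto
  have e2: "ga / KD * gD (tt (Suc k)) \<le> DD (Suc k)" "DD (Suc k) \<le> (ga + de) * KD * gD (tt (Suc k))"
    using DD_est[of "Suc k"] by auto
  have r: "gD (tt (Suc k)) \<le> KR * gD (tt k)" "gD (tt k) \<le> KR * gD (tt (Suc k))"
    using ratio_succ[of "- ga - 1" "- de" k] by (auto simp: KR_def)
  have c0: "0 \<le> ga / KD" "0 \<le> (ga + de) * KD" using ga_pos de_pos KD_pos by auto
  have "ga / (KD * KR) \<le> ga / KD"
    by (rule divide_left_mono) (use ga_pos KD_pos KR_ge1 in auto)
  then have "lD * gD (tt k) \<le> ga / KD * gD (tt k)"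
    unfolding lD_def using gp by (intro mult_right_mono) auto
  moreover have "(ga + de) * KD * gD (tt k) \<le> hD * gD (tt k)"
    unfolding hD_def using KR_ge1 c0 gp by (intro mult_right_mono) (auto simp: mult_le_cancel_left1)
  moreover have "lD * gD (tt k) \<le> ga / KD * gD (tt (Suc k))"
  proof -
    have "lD * gD (tt k) \<le> lD * (KR * gD (tt (Suc k)))" using r(2) lD_pos
      by (intro mult_left_mono) auto
    then show ?thesis unfolding lD_def using KR_ge1 by simp
  qed
  moreover have "(ga + de) * KD * gD (tt (Suc k)) \<le> hD * gD (tt k)"
    unfolding hD_def using mult_left_mono[OF r(1) c0(2)] by (simp add: mult_ac)
  ultimately show ?thesis using e1 e2 by linarith
qed


lemma DD_pos: "1 \<le> k \<Longrightarrow> 0 < DD k \<and> 0 < DD (Suc k)"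
  using DD_both[of k] lD_pos gpos_tt[of "- ga - 1" "- de" k]
  by (smt (verit) mult_pos_pos)

abbreviation "gW \<equiv> g (al - 1) be"
definition "cw = min (lD powr (- (m - 1))) (hD powr (- (m - 1)))"
definition "Cw = max (lD powr (- (m - 1))) (hD powr (- (m - 1)))"

lemma tt_gt1: "1 < tt k" using tt_ge[of k] by linarith

lemma ww_form: assumes k: "1 \<le> k"
  shows "ww k = (DD k / gD (tt k)) powr (- (m - 1)) * gW (tt k)"
proof -
  define x where "x = DD k / gD (tt k)"
  have gp: "0 < gD (tt k)" by (rule gpos_tt)
  have xp: "0 < x" using DD_pos[OF k] gp by (simp add: x_def)
  have D: "DD k = x * gD (tt k)" using gp by (simp add: x_def)
  have "DD k powr (m - 1) = x powr (m - 1) * g ((- ga - 1) * (m - 1)) (- de * (m - 1)) (tt k)"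
    unfolding D using xp gp by (simp add: powr_mult g_powr[OF tt_gt1])
  then have "ww k = g 0 si (tt k) / (x powr (m - 1) * g ((- ga - 1) * (m - 1)) (- de * (m - 1)) (tt k))"
    by (simp add: ww_def Ph_def)
  also have "\<dots> = x powr (- (m - 1)) * (g 0 si (tt k) * (1 / g ((- ga - 1) * (m - 1)) (- de * (m - 1)) (tt k)))"
    unfolding powr_minus_divide by simp
  also have "g 0 si (tt k) * (1 / g ((- ga - 1) * (m - 1)) (- de * (m - 1)) (tt k)) = gW (tt k)"
  proof -
    have "g 0 si (tt k) * (1 / g ((- ga - 1) * (m - 1)) (- de * (m - 1)) (tt k))
       = g (0 + - ((- ga - 1) * (m - 1))) (si + - (- de * (m - 1))) (tt k)"
      by (simp add: g_inv[OF tt_gt1] g_mult[OF tt_gt1] del: g_def)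
    also have "0 + - ((- ga - 1) * (m - 1)) = al - 1" using al_eq by (simp add: algebra_simps)
    also have "si + - (- de * (m - 1)) = be" using be_eq by (simp add: algebra_simps)
    finally show ?thesis .
  qed
  finally show ?thesis by (simp add: x_def)
qed

lemma ww_est: assumes k: "1 \<le> k"
  shows "cw * gW (tt k) \<le> ww k \<and> ww k \<le> Cw * gW (tt k)"
proof -
  have gp: "0 < gD (tt k)" by (rule gpos_tt)
  have b: "lD \<le> DD k / gD (tt k)" "DD k / gD (tt k) \<le> hD"
    using DD_both[OF k] gp by (auto simp: field_simps)
  from pw_bounds[OF lD_pos b, of "- (m - 1)"]
  have "cw \<le> (DD k / gD (tt k)) powr (- (m - 1))" "(DD k / gD (tt k)) powr (- (m - 1)) \<le> Cw"
    by (auto simp: cw_def Cw_def)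
  then show ?thesis unfolding ww_form[OF k] using gpos_tt[of "al - 1" be k]
    by (auto intro: mult_right_mono)
qed

definition "KW = 2 powr (\<bar>al - 1\<bar> + \<bar>be\<bar>)"

lemma cw_pos: "0 < cw" unfolding cw_def using lD_pos hD_pos by simp

lemma Cw_pos: "0 < Cw" unfolding Cw_def using lD_pos by (simp add: less_max_iff_disj)

lemma ww_succ: assumes k: "1 \<le> k" shows "ww (Suc k) \<le> Cw * KW * gW (tt k)"
proof -
  have "ww (Suc k) \<le> Cw * gW (tt (Suc k))" using ww_est[of "Suc k"] by auto
  also have "\<dots> \<le> Cw * (KW * gW (tt k))"
    using ratio_succ[of "al - 1" be k] less_imp_le[OF Cw_pos] unfolding KW_def
    by (intro mult_left_mono) auto
  finally show ?thesis by (simp add: mult_ac)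
qed

lemma ww_pos: "1 \<le> k \<Longrightarrow> 0 < ww k"
  using ww_est[of k] cw_pos gpos_tt[of "al - 1" be k] by (smt (verit) mult_pos_pos)

definition "KH = 2 powr (\<bar>al - 1\<bar> + \<bar>be - 1 + 1\<bar>)"

lemma HH_diff: assumes k: "1 \<le> k"
  shows "al / KH * gW (tt k) \<le> HH k - HH (k - 1) \<and> HH k - HH (k - 1) \<le> (al + be) * KH * gW (tt k)"
proof -
  have "al / KH * g (al - 1) (be - 1 + 1) (tt k) \<le> 1 * (g al be (tt k) - g al be (tt k - 1)) \<and>
        1 * (g al be (tt k) - g al be (tt k - 1)) \<le> (al + be) * KH * g (al - 1) (be - 1 + 1) (tt k)"
    unfolding KH_def
  proof (rule diff_est[OF tt_ge])
    fix x :: real assume "1 \<le> x"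
    then show "al * x powr 1 \<le> 1 * (al * x + be) \<and> 1 * (al * x + be) \<le> (al + be) * x powr 1"
      using be_pos by (simp add: algebra_simps)
  qed (use al_pos in simp)
  then show ?thesis using tt_pred[OF k] by (simp add: HH_def)
qed

definition "KP = 2 powr (\<bar>0 - 1\<bar> + \<bar>si - 1 + 0\<bar>)"
definition "KR5 = 2 powr (\<bar>- 1\<bar> + \<bar>si - 1\<bar>)"

lemma Ph_diff: "si / (KP * KR5) * g (- 1) (si - 1) (tt k) \<le> Ph (Suc k) - Ph k"
proof -
  have t1: "tt (Suc k) - 1 = tt k" by (simp add: tt_def)
  have "si / KP * g (0 - 1) (si - 1 + 0) (tt (Suc k)) \<le> 1 * (g 0 si (tt (Suc k)) - g 0 si (tt (Suc k) - 1)) \<and>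
        1 * (g 0 si (tt (Suc k)) - g 0 si (tt (Suc k) - 1)) \<le> si * KP * g (0 - 1) (si - 1 + 0) (tt (Suc k))"
    unfolding KP_def
  proof (rule diff_est[OF tt_ge])
    fix x :: real assume "1 \<le> x"
    then show "si * x powr 0 \<le> 1 * (0 * x + si) \<and> 1 * (0 * x + si) \<le> si * x powr 0" by simp
  qed (use si_pos in simp)
  then have A: "si / KP * g (- 1) (si - 1) (tt (Suc k)) \<le> Ph (Suc k) - Ph k"
    using t1 by (simp add: Ph_def)
  have r: "g (- 1) (si - 1) (tt k) \<le> KR5 * g (- 1) (si - 1) (tt (Suc k))"
    using ratio_succ[of "- 1" "si - 1" k] by (simp add: KR5_def)
  have kp: "0 < KP" "0 < KR5" by (simp_all add: KP_def KR5_def)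
  have "si / (KP * KR5) * g (- 1) (si - 1) (tt k) \<le> si / (KP * KR5) * (KR5 * g (- 1) (si - 1) (tt (Suc k)))"
    using r si_pos kp by (intro mult_left_mono) auto
  also have "\<dots> = si / KP * g (- 1) (si - 1) (tt (Suc k))" using kp by simp
  finally show ?thesis using A by linarith
qed

lemma Gk_est: assumes k: "1 \<le> k"
  shows "lD / 2 * gD (tt k) \<le> Gk k \<and> Gk k \<le> hD * gD (tt k)"
proof -
  let ?A = "ww k" and ?B = "ww (Suc k)" and ?d1 = "DD k" and ?d2 = "DD (Suc k)" and ?G = "gD (tt k)"
  have A: "0 < ?A" "0 < ?B" using ww_pos[OF k] ww_pos[of "Suc k"] by auto
  have gp: "0 < ?G" by (rule gpos_tt)
  have lo0: "0 \<le> lD * ?G" using lD_pos gp by simp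
  from DD_both[OF k] have d: "lD * ?G \<le> ?d1" "?d1 \<le> hD * ?G" "lD * ?G \<le> ?d2" "?d2 \<le> hD * ?G" by auto
  have sq1: "(lD * ?G)^2 \<le> ?d1^2" "(lD * ?G)^2 \<le> ?d2^2" using d lo0 by (auto intro: power_mono)
  have sq2: "?d1^2 \<le> (hD * ?G)^2" "?d2^2 \<le> (hD * ?G)^2" using d lo0 by (auto intro: power_mono)
  have m1: "?A * (lD * ?G)^2 \<le> ?A * ?d1^2" "?B * (lD * ?G)^2 \<le> ?B * ?d2^2"
    using mult_left_mono[OF sq1(1) less_imp_le[OF A(1)]] mult_left_mono[OF sq1(2) less_imp_le[OF A(2)]] by auto
  have "(?A + ?B) * (lD * ?G)^2 \<le> ?A * ?d1^2 + ?B * ?d2^2"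
    using m1 unfolding distrib_right by linarith
  then have L: "(lD * ?G)^2 / 2 \<le> (?A * ?d1^2 + ?B * ?d2^2) / (2 * (?A + ?B))"
    using A by (simp add: field_simps)
  have m2: "?A * ?d1^2 \<le> ?A * (hD * ?G)^2" "?B * ?d2^2 \<le> ?B * (hD * ?G)^2"
    using mult_left_mono[OF sq2(1) less_imp_le[OF A(1)]] mult_left_mono[OF sq2(2) less_imp_le[OF A(2)]] by auto
  have "?A * ?d1^2 + ?B * ?d2^2 \<le> (?A + ?B) * (hD * ?G)^2"
    using m2 unfolding distrib_right by linarith
  then have "(?A * ?d1^2 + ?B * ?d2^2) / (2 * (?A + ?B)) \<le> (?A + ?B) * (hD * ?G)^2 / (2 * (?A + ?B))"
    by (rule divide_right_mono) (use A in auto)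
  also have "\<dots> = (hD * ?G)^2 / 2"
  proof -
    have "?A + ?B \<noteq> 0" using A by simp
    then show ?thesis by (simp add: field_simps)
  qed
  also have "\<dots> \<le> (hD * ?G)^2" by simp
  finally have U: "(?A * ?d1^2 + ?B * ?d2^2) / (2 * (?A + ?B)) \<le> (hD * ?G)^2" .
  have "0 \<le> (lD * ?G)^2" by simp
  then have "(lD / 2 * ?G)^2 \<le> (lD * ?G)^2 / 2" by (simp add: power_mult_distrib power_divide)
  then have "lD / 2 * ?G \<le> Gk k" unfolding Gk_def using L by (intro real_le_rsqrt) linarith
  moreover have "Gk k \<le> hD * ?G" unfolding Gk_def using U hD_pos gp by (intro real_le_lsqrt) auto
  ultimately show ?thesis by simp
qed

definition "Mq = max ((lD / 2) powr q) (hD powr q)"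
definition "Kc = Mq * (Cw + Cw * KW) * (KP * KR5) / si"

lemma Mq_pos: "0 < Mq" unfolding Mq_def using lD_pos by (simp add: less_max_iff_disj)

lemma core: assumes k: "1 \<le> k"
  shows "ff k powr p * Gk k powr q * (ww k + ww (Suc k)) \<le> Kc * (Ph (Suc k) - Ph k)"
proof -
  let ?G = "gD (tt k)"
  have gp: "0 < ?G" by (rule gpos_tt)
  define y where "y = Gk k / ?G"
  have yb: "lD / 2 \<le> y" "y \<le> hD" using Gk_est[OF k] gp by (auto simp: y_def field_simps)
  have l2: "0 < lD / 2" using lD_pos by simp
  have yq: "y powr q \<le> Mq" using pw_bounds[OF l2 yb, of q] by (simp add: Mq_def)
  have y0: "0 < y" using yb l2 by linarith
  have Gk: "Gk k = y * ?G" using gp by (simp add: y_def)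
  have Gq: "Gk k powr q = y powr q * g ((- ga - 1) * q) (- de * q) (tt k)"
    unfolding Gk using y0 gp by (simp add: powr_mult g_powr[OF tt_gt1])
  have fp: "ff k powr p = g (- ga * p) (- de * p) (tt k)" unfolding ff_def by (simp add: g_powr[OF tt_gt1])
  have wsum: "ww k + ww (Suc k) \<le> (Cw + Cw * KW) * gW (tt k)"
    using ww_est[OF k] ww_succ[OF k] by (simp add: algebra_simps)
  have w0: "0 \<le> ww k + ww (Suc k)" using ww_pos[OF k] ww_pos[of "Suc k"] by simp
  have g1: "0 < g (- ga * p) (- de * p) (tt k)" "0 < g ((- ga - 1) * q) (- de * q) (tt k)" by (rule gpos_tt)+
  have "ff k powr p * Gk k powr q * (ww k + ww (Suc k))
      = y powr q * (g (- ga * p) (- de * p) (tt k) * g ((- ga - 1) * q) (- de * q) (tt k)) * (ww k + ww (Suc k))"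
    unfolding fp Gq by (simp add: mult_ac)
  also have "\<dots> \<le> Mq * (g (- ga * p) (- de * p) (tt k) * g ((- ga - 1) * q) (- de * q) (tt k)) * ((Cw + Cw * KW) * gW (tt k))"
    using yq wsum w0 g1 Mq_pos
    by (intro mult_mono) (auto intro: mult_nonneg_nonneg)
  also have "\<dots> = Mq * (Cw + Cw * KW) * (g (- ga * p) (- de * p) (tt k) * g ((- ga - 1) * q) (- de * q) (tt k) * gW (tt k))"
    by (simp only: mult_ac)
  also have "\<dots> = Mq * (Cw + Cw * KW) * g ((- ga * p) + ((- ga - 1) * q) + (al - 1)) ((- de * p) + (- de * q) + be) (tt k)"
    by (simp only: g_mult[OF tt_gt1])
  also have "(- ga * p) + ((- ga - 1) * q) + (al - 1) = - 1" using expo1 by (simp add: algebra_simps)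
  also have "g (- 1) ((- de * p) + (- de * q) + be) (tt k) \<le> g (- 1) (si - 1) (tt k)"
    using expo2 tt_ge[of k] by (intro g_mono_b) (auto simp: algebra_simps)
  then have "Mq * (Cw + Cw * KW) * g (- 1) ((- de * p) + (- de * q) + be) (tt k) \<le> Mq * (Cw + Cw * KW) * g (- 1) (si - 1) (tt k)"
    using Mq_pos Cw_pos KW_def by (intro mult_left_mono) (auto intro: mult_nonneg_nonneg)
  also have "Mq * (Cw + Cw * KW) * g (- 1) (si - 1) (tt k) \<le> Kc * (Ph (Suc k) - Ph k)"
  proof -
    have kp: "0 < KP" "0 < KR5" by (simp_all add: KP_def KR5_def)
    have c0: "0 \<le> Mq * (Cw + Cw * KW) * (KP * KR5) / si" using Mq_pos Cw_pos kp si_pos KW_def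
      by (auto intro!: mult_nonneg_nonneg divide_nonneg_pos)
    have "Mq * (Cw + Cw * KW) * g (- 1) (si - 1) (tt k) = Mq * (Cw + Cw * KW) * (KP * KR5) / si * (si / (KP * KR5) * g (- 1) (si - 1) (tt k))"
      using kp si_pos by (simp add: field_simps)
    also have "\<dots> \<le> Mq * (Cw + Cw * KW) * (KP * KR5) / si * (Ph (Suc k) - Ph k)"
      by (rule mult_left_mono[OF Ph_diff c0])
    finally show ?thesis by (simp add: Kc_def)
  qed
  finally show ?thesis .
qed

lemma KH_pos: "0 < KH" by (simp add: KH_def)

lemma ww_HH: assumes k: "1 \<le> k"
  shows "cw / ((al + be) * KH) * (HH k - HH (k - 1)) \<le> ww k \<and> ww k \<le> Cw * KH / al * (HH k - HH (k - 1))"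
proof -
  have h: "al / KH * gW (tt k) \<le> HH k - HH (k - 1)" "HH k - HH (k - 1) \<le> (al + be) * KH * gW (tt k)"
    using HH_diff[OF k] by auto
  have w: "cw * gW (tt k) \<le> ww k" "ww k \<le> Cw * gW (tt k)" using ww_est[OF k] by auto
  have pos: "0 < al" "0 < be" "0 < KH" "0 < cw" "0 < Cw" using al_pos be_pos KH_pos cw_pos Cw_pos by auto
  have "cw / ((al + be) * KH) * (HH k - HH (k - 1)) \<le> cw / ((al + be) * KH) * ((al + be) * KH * gW (tt k))"
    using h(2) pos by (intro mult_left_mono) auto
  also have "\<dots> = cw * gW (tt k)" using pos by simp
  finally have A: "cw / ((al + be) * KH) * (HH k - HH (k - 1)) \<le> ww k" using w by linarith
  have "Cw * gW (tt k) = Cw * KH / al * (al / KH * gW (tt k))" using pos by simp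
  also have "\<dots> \<le> Cw * KH / al * (HH k - HH (k - 1))"
    using h(1) pos by (intro mult_left_mono) auto
  finally show ?thesis using A w by linarith
qed

definition "c1 = cw / ((al + be) * KH)"
definition "C1 = Cw * KH / al"

lemma c1_pos: "0 < c1" unfolding c1_def using cw_pos al_pos be_pos KH_pos by simp
lemma C1_pos: "0 < C1" unfolding C1_def using Cw_pos al_pos KH_pos by simp

lemma Wsum: "c1 * (HH j - HH 0) \<le> (\<Sum>k=1..j. ww k) \<and> (\<Sum>k=1..j. ww k) \<le> C1 * (HH j - HH 0)"
proof (induction j)
  case 0 then show ?case by simp
next
  case (Suc j)
  have "c1 * (HH (Suc j) - HH (Suc j - 1)) \<le> ww (Suc j)" "ww (Suc j) \<le> C1 * (HH (Suc j) - HH (Suc j - 1))"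
    using ww_HH[of "Suc j"] by (auto simp: c1_def C1_def)
  then have "c1 * (HH (Suc j) - HH j) \<le> ww (Suc j)" "ww (Suc j) \<le> C1 * (HH (Suc j) - HH j)" by auto
  then show ?case using Suc.IH by (simp add: algebra_simps)
qed

lemma HH_mono: "HH j \<le> HH (Suc j)"
proof -
  have "al / KH * gW (tt (Suc j)) \<le> HH (Suc j) - HH j" using HH_diff[of "Suc j"] by simp
  moreover have "0 \<le> al / KH * gW (tt (Suc j))" using al_pos KH_pos gpos_tt[of "al - 1" be "Suc j"] by simp
  ultimately show ?thesis by linarith
qed

lemma HH_mono': "i \<le> j \<Longrightarrow> HH i \<le> HH j"
  by (induction j) (use HH_mono le_Suc_eq order_trans in blast)+

lemma HH01: "HH 0 < HH 1"
proof -
  have "al / KH * gW (tt 1) \<le> HH 1 - HH 0" using HH_diff[of 1] by simp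
  moreover have "0 < al / KH * gW (tt 1)" using al_pos KH_pos gpos_tt[of "al - 1" be 1] by simp
  ultimately show ?thesis by linarith
qed

lemma HH0_pos: "0 < HH 0" unfolding HH_def by (rule gpos_tt)

lemma ff_pos: "0 < ff k" unfolding ff_def by (rule gpos_tt)

lemma Ph_inc: "Ph k < Ph (Suc k)"
proof -
  have "0 < si / (KP * KR5) * g (- 1) (si - 1) (tt k)"
    using si_pos gpos_tt[of "- 1" "si - 1" k] by (simp add: KP_def KR5_def)
  then show ?thesis using Ph_diff[of k] by linarith
qed

lemma scal: assumes lam: "0 < lam" and K: "lam powr PP * K \<le> 1" "0 \<le> K" and A: "0 \<le> A"
  and W: "0 < W" and AW: "A * W \<le> K * Dl" and Dl: "0 \<le> Dl"
  shows "lam powr (m - 1) * (- Dl) / W + lam powr (p + q) * A \<le> 0"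
proof -
  have e: "lam powr (p + q) = lam powr (m - 1) * lam powr PP"
    unfolding powr_add[symmetric] by (simp add: PP_def)
  have l1: "0 < lam powr (m - 1)" "0 < lam powr PP" using lam by auto
  have "A \<le> K * Dl / W" using AW W by (simp add: field_simps)
  then have "lam powr PP * A \<le> lam powr PP * (K * Dl / W)" using l1 by (intro mult_left_mono) auto
  also have "\<dots> = (lam powr PP * K) * (Dl / W)" by simp
  also have "\<dots> \<le> 1 * (Dl / W)" using K Dl W by (intro mult_right_mono) auto
  finally have "lam powr PP * A \<le> Dl / W" by simp
  then have "lam powr (m - 1) * (lam powr PP * A) \<le> lam powr (m - 1) * (Dl / W)"
    using l1 by (intro mult_left_mono) auto
  then show ?thesis unfolding e by (simp add: mult_ac)
qed

lemma pw_pos_m: "0 < (x::real) \<Longrightarrow> \<bar>x\<bar> powr (m - 2) * x = x powr (m - 1)"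
  using powr_add[of x "m - 2" 1] by simp

lemma pw_neg_m: "0 < (x::real) \<Longrightarrow> \<bar>- x\<bar> powr (m - 2) * (- x) = - (x powr (m - 1))"
  using pw_pos_m[of x] by simp

lemma frac_s: "(s::real) \<noteq> 0 \<Longrightarrow> (a / s * x - b / s * y) / (c / s + d / s) = (a * x - b * y) / (c + d)"
proof -
  assume s: "s \<noteq> 0"
  have "(a / s * x - b / s * y) / (c / s + d / s) = ((a * x - b * y) / s) / ((c + d) / s)"
    by (simp add: diff_divide_distrib add_divide_distrib)
  also have "\<dots> = (a * x - b * y) / (c + d)" using s by simp
  finally show ?thesis .
qed

lemma frac_s2: "(s::real) \<noteq> 0 \<Longrightarrow> (a / s * x + b / s * y) / (2 * (c / s + d / s)) = (a * x + b * y) / (2 * (c + d))"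
proof -
  assume s: "s \<noteq> 0"
  have "(a / s * x + b / s * y) / (2 * (c / s + d / s)) = ((a * x + b * y) / s) / ((2 * (c + d)) / s)"
    by (simp add: add_divide_distrib)
  also have "\<dots> = (a * x + b * y) / (2 * (c + d))" using s by simp
  finally show ?thesis .
qed

lemma vertex_nonroot:
  assumes N: "2 \<le> N" and k: "1 \<le> k" and lam: "0 < lam" and K: "lam powr PP * Kc \<le> 1"
    and b: "\<And>j. 1 \<le> j \<Longrightarrow> b j = ww j / (real N * real (N - 1) ^ (j - 1))"
    and uf: "\<And>j. uf j = lam * ff j"
  shows "0 < sqrt ((b k * (uf (k - 1) - uf k)^2 + real (N - 1) * b (Suc k) * (uf (Suc k) - uf k)^2)
             / (2 * (b k + real (N - 1) * b (Suc k)))) \<and>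
    (1 / (b k + real (N - 1) * b (Suc k))) *
      (b k * (\<bar>uf (k - 1) - uf k\<bar> powr (m - 2) * (uf (k - 1) - uf k))
       + real (N - 1) * b (Suc k) * (\<bar>uf (Suc k) - uf k\<bar> powr (m - 2) * (uf (Suc k) - uf k)))
    + uf k powr p * sqrt ((b k * (uf (k - 1) - uf k)^2 + real (N - 1) * b (Suc k) * (uf (Suc k) - uf k)^2)
             / (2 * (b k + real (N - 1) * b (Suc k)))) powr q \<le> 0"
proof -
  define s where "s = real N * real (N - 1) ^ (k - 1)"
  have sp: "0 < s" using N by (simp add: s_def)
  have b1: "b k = ww k / s" using b[OF k] by (simp add: s_def)
  have b2: "real (N - 1) * b (Suc k) = ww (Suc k) / s"
  proof -
    have "real (N - 1) ^ (Suc k - 1) = real (N - 1) * real (N - 1) ^ (k - 1)" using k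
      by (metis Suc_diff_le diff_Suc_1 power_Suc)
    then show ?thesis using b[of "Suc k"] N by (simp add: s_def)
  qed
  let ?D1 = "DD k" and ?D2 = "DD (Suc k)" and ?W = "ww k + ww (Suc k)"
  have Dp: "0 < ?D1" "0 < ?D2" using DD_pos[OF k] by auto
  have wp: "0 < ww k" "0 < ww (Suc k)" using ww_pos[OF k] ww_pos[of "Suc k"] by auto
  have u1: "uf (k - 1) - uf k = lam * ?D1" by (simp add: uf DD_def algebra_simps)
  have u2: "uf (Suc k) - uf k = - (lam * ?D2)" by (simp add: uf DD_def algebra_simps)
  have p1: "ww k * ?D1 powr (m - 1) = Ph k" using Dp by (simp add: ww_def)
  have p2: "ww (Suc k) * ?D2 powr (m - 1) = Ph (Suc k)" using Dp by (simp add: ww_def)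
  have vm: "b k + real (N - 1) * b (Suc k) = ?W / s" unfolding b1 b2 by (simp add: add_divide_distrib)
  have ml: "(1 / (b k + real (N - 1) * b (Suc k))) *
      (b k * (\<bar>uf (k - 1) - uf k\<bar> powr (m - 2) * (uf (k - 1) - uf k))
       + real (N - 1) * b (Suc k) * (\<bar>uf (Suc k) - uf k\<bar> powr (m - 2) * (uf (Suc k) - uf k)))
     = lam powr (m - 1) * (- (Ph (Suc k) - Ph k)) / ?W"
  proof -
    have "(1 / (b k + real (N - 1) * b (Suc k))) *
      (b k * (\<bar>uf (k - 1) - uf k\<bar> powr (m - 2) * (uf (k - 1) - uf k))
       + real (N - 1) * b (Suc k) * (\<bar>uf (Suc k) - uf k\<bar> powr (m - 2) * (uf (Suc k) - uf k)))
      = (ww k / s * (lam * ?D1) powr (m - 1) - ww (Suc k) / s * (lam * ?D2) powr (m - 1)) / (ww k / s + ww (Suc k) / s)"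
      unfolding u1 u2 pw_pos_m[OF mult_pos_pos[OF lam Dp(1)]] pw_neg_m[OF mult_pos_pos[OF lam Dp(2)]] b2 b1
      by simp
    also have "\<dots> = (ww k * (lam * ?D1) powr (m - 1) - ww (Suc k) * (lam * ?D2) powr (m - 1)) / ?W"
      using sp by (intro frac_s) simp
    also have "\<dots> = lam powr (m - 1) * (ww k * ?D1 powr (m - 1) - ww (Suc k) * ?D2 powr (m - 1)) / ?W"
      using lam Dp by (simp add: powr_mult algebra_simps)
    finally show ?thesis unfolding p1 p2 by simp
  qed
  have gr: "sqrt ((b k * (uf (k - 1) - uf k)^2 + real (N - 1) * b (Suc k) * (uf (Suc k) - uf k)^2)
             / (2 * (b k + real (N - 1) * b (Suc k)))) = lam * Gk k"
  proof -
    have "(b k * (uf (k - 1) - uf k)^2 + real (N - 1) * b (Suc k) * (uf (Suc k) - uf k)^2)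
             / (2 * (b k + real (N - 1) * b (Suc k)))
        = (ww k / s * (lam * ?D1)^2 + ww (Suc k) / s * (lam * ?D2)^2) / (2 * (ww k / s + ww (Suc k) / s))"
      unfolding u1 u2 b2 b1 by simp
    also have "\<dots> = (ww k * (lam * ?D1)^2 + ww (Suc k) * (lam * ?D2)^2) / (2 * ?W)"
      using sp by (intro frac_s2) simp
    also have "\<dots> = lam^2 * ((ww k * ?D1^2 + ww (Suc k) * ?D2^2) / (2 * ?W))"
      by (simp add: power_mult_distrib algebra_simps)
    finally have e: "(b k * (uf (k - 1) - uf k)^2 + real (N - 1) * b (Suc k) * (uf (Suc k) - uf k)^2)
             / (2 * (b k + real (N - 1) * b (Suc k))) = lam^2 * ((ww k * ?D1^2 + ww (Suc k) * ?D2^2) / (2 * ?W))" .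
    have "sqrt (lam^2 * ((ww k * ?D1^2 + ww (Suc k) * ?D2^2) / (2 * ?W))) = lam * Gk k"
      unfolding Gk_def by (subst real_sqrt_mult) (use lam in simp)
    then show ?thesis unfolding e .
  qed
  have Gp: "0 < Gk k"
  proof -
    have "0 < lD / 2 * gD (tt k)" using lD_pos gpos_tt[of "- ga - 1" "- de" k] by simp
    then show ?thesis using Gk_est[OF k] by linarith
  qed
  have c: "ff k powr p * Gk k powr q * ?W \<le> Kc * (Ph (Suc k) - Ph k)" by (rule core[OF k])
  have Kc0: "0 \<le> Kc" unfolding Kc_def using Mq_pos Cw_pos si_pos
    by (auto simp: KW_def KP_def KR5_def intro!: mult_nonneg_nonneg divide_nonneg_pos)
  have "lam powr (m - 1) * (- (Ph (Suc k) - Ph k)) / ?W + lam powr (p + q) * (ff k powr p * Gk k powr q) \<le> 0"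
    by (rule scal[OF lam K Kc0 _ _ c]) (use wp Ph_inc[of k] in auto)
  moreover have "uf k powr p * (lam * Gk k) powr q = lam powr (p + q) * (ff k powr p * Gk k powr q)"
    using lam ff_pos[of k] Gp by (simp add: uf powr_mult powr_add)
  ultimately show ?thesis unfolding ml gr using lam Gp by simp
qed

definition "K0 = ff 0 powr p * (DD 1 / sqrt 2) powr q / DD 1 powr (m - 1)"

lemma K0_nonneg: "0 \<le> K0" unfolding K0_def by simp

lemma vertex_root:
  assumes N: "2 \<le> N" and lam: "0 < lam" and K: "lam powr PP * K0 \<le> 1"
    and b: "b 1 = ww 1 / real N"
    and uf: "\<And>j. uf j = lam * ff j"
  shows "0 < sqrt (real N * b 1 * (uf 1 - uf 0)^2 / (2 * (real N * b 1))) \<and>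
    (1 / (real N * b 1)) * (real N * b 1 * (\<bar>uf 1 - uf 0\<bar> powr (m - 2) * (uf 1 - uf 0)))
    + uf 0 powr p * sqrt (real N * b 1 * (uf 1 - uf 0)^2 / (2 * (real N * b 1))) powr q \<le> 0"
proof -
  let ?D = "DD 1"
  have Dp: "0 < ?D" using DD_pos[of 1] by simp
  have Nb: "0 < real N * b 1" using b N ww_pos[of 1] by simp
  have u: "uf 1 - uf 0 = - (lam * ?D)" by (simp add: uf DD_def algebra_simps)
  have ml: "(1 / (real N * b 1)) * (real N * b 1 * (\<bar>uf 1 - uf 0\<bar> powr (m - 2) * (uf 1 - uf 0)))
     = lam powr (m - 1) * (- (?D powr (m - 1))) / 1"
    proof -
    have "b 1 \<noteq> 0" "0 < N" using Nb N by auto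
    then show ?thesis unfolding u pw_neg_m[OF mult_pos_pos[OF lam Dp]] using lam Dp by (simp add: powr_mult)
  qed
  have gr: "sqrt (real N * b 1 * (uf 1 - uf 0)^2 / (2 * (real N * b 1))) = lam * (?D / sqrt 2)"
  proof -
    have e: "real N * b 1 * (uf 1 - uf 0)^2 / (2 * (real N * b 1)) = (lam * ?D)^2 / 2"
    proof -
      have "b 1 \<noteq> 0" "0 < N" using Nb N by auto
      then show ?thesis unfolding u by simp
    qed
    have "sqrt ((lam * ?D)^2 / 2) = lam * (?D / sqrt 2)" using lam Dp by (simp add: real_sqrt_divide)
    then show ?thesis unfolding e .
  qed
  have Ap: "0 < ?D / sqrt 2" using Dp by simp
  have "lam powr (m - 1) * (- (?D powr (m - 1))) / 1 + lam powr (p + q) * (ff 0 powr p * (?D / sqrt 2) powr q) \<le> 0"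
  proof (rule scal[OF lam K K0_nonneg])
    show "ff 0 powr p * (?D / sqrt 2) powr q * 1 \<le> K0 * ?D powr (m - 1)"
      using Dp by (simp add: K0_def)
  qed auto
  moreover have "uf 0 powr p * (lam * (?D / sqrt 2)) powr q = lam powr (p + q) * (ff 0 powr p * (?D / sqrt 2) powr q)"
  proof -
    have "(lam * (?D / sqrt 2)) powr q = lam powr q * (?D / sqrt 2) powr q"
      using lam Ap by (intro powr_mult)
    then show ?thesis using lam ff_pos[of 0] by (simp add: uf powr_mult powr_add)
  qed
  ultimately show ?thesis unfolding ml gr using lam Ap mult_pos_pos[OF lam Ap] by simp
qed

end

theorem mainTheorem8:
  fixes N :: nat and r :: "nat list" and m p q \<epsilon> :: real
  assumes "N \<ge> 2" and "r \<in> tree_V N"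
    and "m > 1" and "p \<ge> 0" and "m - 1 - p < q" and "q < m"
    and "\<epsilon> > 0"
  shows "\<exists>\<mu>. is_weight (tree_V N) (tree_adj N) \<mu> \<and>
     (\<exists>c C. c > 0 \<and> C > 0 \<and> (\<forall>n::nat. n \<ge> 2 \<longrightarrow>
        c * (real n powr ((m * p + q) / (p + q - m + 1)) * ln (real n) powr ((m - 1) / (p + q - m + 1) + \<epsilon>))
          \<le> W_o (tree_V N) (tree_adj N) \<mu> r n \<and>
        W_o (tree_V N) (tree_adj N) \<mu> r n
          \<le> C * (real n powr ((m * p + q) / (p + q - m + 1)) * ln (real n) powr ((m - 1) / (p + q - m + 1) + \<epsilon>)))) \<and>
     (\<exists>u. nontriv_pos_solution (tree_V N) (tree_adj N) \<mu> m p q u)"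
proof -
  note N = assms(1) and r = assms(2)
  interpret P: prm m p q \<epsilon> by unfold_locales (use assms in auto)
  define b where "b k = (if k = 0 then 0 else P.ww k / (real N * real (N - 1) ^ (k - 1)))" for k
  define K1 where "K1 = max 1 (max P.Kc P.K0)"
  define lam where "lam = K1 powr (- 1 / P.PP)"
  define uf where "uf k = lam * P.ff k" for k
  have K1: "1 \<le> K1" "P.Kc \<le> K1" "P.K0 \<le> K1" by (auto simp: K1_def)
  have lam: "0 < lam" using K1 by (simp add: lam_def)
  have lamPP: "lam powr P.PP = 1 / K1"
  proof -
    have e: "- 1 / P.PP * P.PP = - 1" using P.PP_pos by simp
    have "lam powr P.PP = K1 powr (- 1)" unfolding lam_def powr_powr e ..
    then show ?thesis using K1 by (simp add: powr_minus_divide)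
  qed
  have lamKc: "lam powr P.PP * P.Kc \<le> 1" using K1 unfolding lamPP by (simp add: field_simps)
  have lamK0: "lam powr P.PP * P.K0 \<le> 1" using K1 unfolding lamPP by (simp add: field_simps)
  have bj: "\<And>j. 1 \<le> j \<Longrightarrow> b j = P.ww j / (real N * real (N - 1) ^ (j - 1))" by (simp add: b_def)
  have b_nn: "\<And>k. 0 \<le> b k" using P.ww_pos N by (auto simp: b_def intro!: divide_nonneg_pos less_imp_le)
  have b_pos: "\<And>k. 1 \<le> k \<Longrightarrow> 0 < b k" using P.ww_pos N by (auto simp: b_def)
  have weight: "is_weight (tree_V N) (tree_adj N) (mu N b)"
    unfolding is_weight_def
  proof (intro ballI conjI)
    fix x y assume "x \<in> tree_V N" "y \<in> tree_V N"
    show "0 \<le> mu N b x y" using b_nn by (simp add: mu_def)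
    show "mu N b x y = mu N b y x" by (auto simp: mu_def max.commute dest: adj_sym)
    show "(0 < mu N b x y) = tree_adj N x y"
    proof
      assume "0 < mu N b x y" then show "tree_adj N x y" by (auto simp: mu_def split: if_splits)
    next
      assume a: "tree_adj N x y"
      then have "1 \<le> max (length x) (length y)" using adj_len[OF a] by auto
      then show "0 < mu N b x y" using a b_pos by (simp add: mu_def)
    qed
  qed
  have al': "(m * p + q) / (p + q - m + 1) = P.al" by (simp add: P.al_def P.PP_def)
  have be': "(m - 1) / (p + q - m + 1) + \<epsilon> = P.be" by (simp add: P.be_def P.PP_def)
  have sumZ: "(\<Sum>z\<in>Zs N j. b (length z)) = (\<Sum>k=1..j. P.ww k)" for j
  proof -
    have "(\<Sum>z\<in>Zs N j. b (length z)) = (\<Sum>k=1..j. real (card (lev N k)) * b k)" by (rule sum_Zs)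
    also have "\<dots> = (\<Sum>k=1..j. P.ww k)"
    proof (rule sum.cong)
      fix k assume "k \<in> {1..j}"
      then have k: "1 \<le> k" by simp
      then have "card (lev N k) = N * (N - 1) ^ (k - 1)" using card_lev[of N "k - 1"] by simp
      moreover have "0 < real N * real (N - 1) ^ (k - 1)" using N by simp
      ultimately show "real (card (lev N k)) * b k = P.ww k" using bj[OF k] N by simp
    qed simp
    finally show ?thesis .
  qed
  define hh where "hh n = g P.al P.be (real n)" for n :: nat
  define cc where "cc = 6 + real (length r)"
  define Cs where "Cs = (1 + cc / 2) powr P.al * (1 + ln (1 + cc) / ln 2) powr P.be"
  define C where "C = P.C1 * Cs"
  have Cs: "0 < Cs"
  proof -
    have "0 \<le> cc" by (simp add: cc_def)
    then have "0 < 1 + cc / 2" by linarith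
    moreover have "0 < ln (1 + cc) / ln 2" by (simp add: cc_def)
    ultimately show ?thesis unfolding Cs_def by simp
  qed
  have Cpos: "0 < C" using P.C1_pos Cs by (simp add: C_def)
  have upper: "W_o (tree_V N) (tree_adj N) (mu N b) r n \<le> C * hh n" if n: "2 \<le> n" for n
  proof -
    let ?j = "n + 1 + length r"
    have "W_o (tree_V N) (tree_adj N) (mu N b) r n \<le> (\<Sum>k=1..?j. P.ww k)"
      using W_upper[where b=b and n=n, OF r b_nn] unfolding sumZ .
    also have "\<dots> \<le> P.C1 * (P.HH ?j - P.HH 0)" using P.Wsum[of ?j] by simp
    also have "\<dots> \<le> P.C1 * P.HH ?j" using P.HH0_pos P.C1_pos by simp
    also have "P.HH ?j = g P.al P.be (real n + cc)" by (simp add: P.HH_def P.tt_def cc_def algebra_simps)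
    also have "\<dots> \<le> Cs * hh n" unfolding Cs_def hh_def
      by (rule g_shift_up) (use n P.al_pos P.be_pos in \<open>auto simp: cc_def\<close>)
    finally show ?thesis using P.C1_pos by (simp add: C_def mult.assoc)
  qed
  define mu0 where "mu0 = b (Suc (length r))"
  have mu0: "0 < mu0" unfolding mu0_def by (rule b_pos) simp
  define M where "M = hh (2 * length r + 2)"
  have Mpos: "0 < M" unfolding M_def hh_def by (rule g_pos) simp
  define ca where "ca = P.c1 * (1 - P.HH 0 / P.HH 1) * ((1/2) powr P.al * (1/2) powr P.be)"
  have ca: "0 < ca" unfolding ca_def using P.c1_pos P.HH01 P.HH0_pos by simp
  define c where "c = min ca (mu0 / M)"
  have cpos: "0 < c" using ca mu0 Mpos by (simp add: c_def)
  have hpos: "0 < hh n" if "2 \<le> n" for n unfolding hh_def by (rule g_pos) (use that in simp)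
  have lower: "c * hh n \<le> W_o (tree_V N) (tree_adj N) (mu N b) r n" if n: "2 \<le> n" for n
  proof (cases "2 * length r + 2 \<le> n")
    case True
    define j where "j = n - length r"
    have j1: "1 \<le> j" using True by (simp add: j_def)
    have jn: "real n / 2 \<le> real j" using True by (simp add: j_def)
    have "c * hh n \<le> ca * hh n" using hpos[OF n] by (intro mult_right_mono) (auto simp: c_def)
    also have "ca * hh n \<le> P.c1 * (1 - P.HH 0 / P.HH 1) * P.HH j"
    proof -
      have "((1/2) powr P.al * (1/2) powr P.be) * hh n \<le> g P.al P.be (real n / 2 + 5)"
        unfolding hh_def by (rule g_half_low) (use n P.al_pos P.be_pos in auto)
      also have "\<dots> \<le> P.HH j" unfolding P.HH_def P.tt_def
        by (rule g_mono_t) (use jn P.al_pos P.be_pos in auto)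
      finally have "((1/2) powr P.al * (1/2) powr P.be) * hh n \<le> P.HH j" .
      moreover have "0 \<le> P.c1 * (1 - P.HH 0 / P.HH 1)" using P.c1_pos P.HH01 P.HH0_pos by simp
      ultimately have "P.c1 * (1 - P.HH 0 / P.HH 1) * (((1/2) powr P.al * (1/2) powr P.be) * hh n)
          \<le> P.c1 * (1 - P.HH 0 / P.HH 1) * P.HH j" by (rule mult_left_mono)
      then show ?thesis unfolding ca_def by (simp add: mult_ac)
    qed
    also have "\<dots> \<le> P.c1 * (P.HH j - P.HH 0)"
    proof -
      have h1: "P.HH 1 \<le> P.HH j" by (rule P.HH_mono'[OF j1])
      have "P.HH 0 / P.HH 1 * P.HH j \<ge> P.HH 0"
        using h1 P.HH0_pos P.HH01 by (simp add: field_simps)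
      then have "(1 - P.HH 0 / P.HH 1) * P.HH j \<le> P.HH j - P.HH 0" by (simp add: algebra_simps)
      then have "P.c1 * ((1 - P.HH 0 / P.HH 1) * P.HH j) \<le> P.c1 * (P.HH j - P.HH 0)"
        using P.c1_pos by (intro mult_left_mono) auto
      then show ?thesis by (simp add: mult_ac)
    qed
    also have "\<dots> \<le> (\<Sum>k=1..j. P.ww k)" using P.Wsum[of j] by simp
    also have "\<dots> \<le> W_o (tree_V N) (tree_adj N) (mu N b) r n"
      using W_lower[where b=b and n=n, OF r b_nn] unfolding sumZ j_def .
    finally show ?thesis .
  next
    case False
    have "hh n \<le> M" unfolding M_def hh_def
      by (rule g_mono_t) (use False n P.al_pos P.be_pos in auto)
    then have "c * hh n \<le> mu0 / M * M" using cpos Mpos hpos[OF n] by (intro mult_mono) (auto simp: c_def)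
    also have "\<dots> = mu0" using Mpos by simp
    also have "\<dots> \<le> W_o (tree_V N) (tree_adj N) (mu N b) r n"
      unfolding mu0_def by (rule W_pos[where b=b, OF r N b_nn])
    finally show ?thesis .
  qed
  have sol: "nontriv_pos_solution (tree_V N) (tree_adj N) (mu N b) m p q (\<lambda>y. uf (length y))"
    unfolding nontriv_pos_solution_def
  proof (intro conjI ballI)
    show "\<And>x. 0 < uf (length x)" using lam P.ff_pos by (simp add: uf_def)
    have z: "[0] \<in> tree_V N" using tV_snoc[OF tV_nil, of 0 N] N by simp
    have "P.ff 0 \<noteq> P.ff 1" using P.DD_pos[of 1] by (simp add: P.DD_def)
    then have "uf (length ([]::nat list)) \<noteq> uf (length [0::nat])" using lam by (simp add: uf_def)
    then show "\<exists>x\<in>tree_V N. \<exists>y\<in>tree_V N. uf (length x) \<noteq> uf (length y)" using z tV_nil by blast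
  next
    fix x assume x: "x \<in> tree_V N"
    let ?gr = "gradn (tree_V N) (tree_adj N) (mu N b) (\<lambda>y. uf (length y)) x"
    let ?ml = "mlap (tree_V N) (tree_adj N) (mu N b) m (\<lambda>y. uf (length y)) x"
    have main: "0 < ?gr \<and> ?ml + uf (length x) powr p * ?gr powr q \<le> 0"
    proof (cases "x = []")
      case True
      have b1: "b 1 = P.ww 1 / real N" by (simp add: b_def)
      from P.vertex_root[where b=b and uf=uf, OF N lam lamK0 b1 uf_def]
      show ?thesis using True x by (simp add: mlap_rad gradn_rad vmeas_rad)
    next
      case False
      then have k: "1 \<le> length x" by (simp add: Suc_le_eq)
      from P.vertex_nonroot[where b=b and uf=uf, OF N k lam lamKc bj uf_def]
      show ?thesis using False x by (simp add: mlap_rad gradn_rad vmeas_rad)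
    qed
    have gp: "gpow ?gr q = ?gr powr q" using main by (simp add: gpow_def)
    show "q < 0 \<longrightarrow> 0 < ?gr" using main by simp
    show "?ml + uf (length x) powr p * gpow ?gr q \<le> 0" using main unfolding gp by simp
  qed
  show ?thesis
    unfolding al' be'
  proof (intro exI conjI)
    show "is_weight (tree_V N) (tree_adj N) (mu N b)" by (rule weight)
    show "0 < c" by (rule cpos)
    show "0 < C" by (rule Cpos)
    show "\<forall>n\<ge>2. c * (real n powr P.al * ln (real n) powr P.be) \<le> W_o (tree_V N) (tree_adj N) (mu N b) r n \<and>
          W_o (tree_V N) (tree_adj N) (mu N b) r n \<le> C * (real n powr P.al * ln (real n) powr P.be)"
      using lower upper by (simp add: hh_def g_def)
    show "nontriv_pos_solution (tree_V N) (tree_adj N) (mu N b) m p q (\<lambda>y. uf (length y))" by (rule sol)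
  qed
qed

end
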